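(* Let $\mathcal M$ be a $\Sigma$-module over a field $\mathbb F$ such that each $\mathcal M(n)$ has a basis $\mathcal B(n)$ stable under the action of $\Sigma_n$. For an object $(A,\beta)$ of $\beta(\mathcal M)$ set, for all ${\underline r}\in\mathrm{Comp}_p(n)$ and $[x]_{\underline r}\in\Sigma_{\underline r}\backslash\mathcal B(n)$, $\gamma_{[x]_{\underline r},{\underline r}}=\beta_{\mathscr O_{\Sigma_{\underline r}}([x]_{\underline r}),{\underline r}}$. Then $(A,\beta)\mapsto(A,\gamma)$ (identity on morphisms) defines a functor $P_{\mathcal M}:\beta(\mathcal M)\to\gamma(\mathcal M)$, and $P_{\mathcal M}$ is an isomorphism of categories.
   Context: $[n]=\{1,\dots,n\}$. A $\Sigma$-module is a sequence of $\mathbb F$-linear $\Sigma_n$-representations $\mathcal M(n)$. Compositions ${\underline r}=(r_1,\dots,r_p)\in\mathrm{Comp}_p(n)$ are tuples of nonnegative integers with sum $n$, identified with the partition of $[n]$ into consecutive intervals ${\underline r}_i$ of lengths $r_i$; $\Sigma_{\underline r}\subseteq\Sigma_n$ preserves each ${\underline r}_i$. For a group $H$ acting on a set, $[x]_H$, $\Omega_H(x)$, $\mathrm{Stab}_H(x)$ denote class, orbit, stabiliser; write $[x]_{\underline r},\mathrm{Stab}_{\underline r}$ for $H=\Sigma_{\underline r}$. $\mathscr O_{\Sigma_{\underline r}}([x]_{\underline r})=\sum_{y\in\Omega_{\Sigma_{\underline r}}(x)}y\in\mathcal M(n)^{\Sigma_{\underline r}}$. For $\rho\in\Sigma_p$: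 ${\underline r}^\rho=(r_{\rho^{-1}(1)},\dots,r_{\rho^{-1}(p)})$, $\rho^*\in\Sigma_n$ the block permutation with blocks of sizes $r_i$ associated to $\rho$. For ${\underline q}\in\mathrm{Comp}_s(p)$: ${\underline q}\rhd{\underline r}=(\sum_{i\in{\underline q}_1}r_i,\dots,\sum_{i\in{\underline q}_s}r_i)$. ${\underline r}\circ_1(l,m)=(l,m,r_2,\dots,r_p)$. Sums over $G/H$ are over left coset representatives. $\beta(\mathcal M)$: objects $(A,\beta)$ with $\beta_{x,{\underline r}}:A^{\times p}\to A$ for ${\underline r}\in\mathrm{Comp}_p(n)$, $x\in\mathcal M(n)^{\Sigma_{\underline r}}$, satisfying ($\beta$1) $\beta_{x,{\underline r}}(a_1,\dots,a_p)=\beta_{\rho^*\cdot x,{\underline r}^\rho}(a_{\rho^{-1}(1)},\dots,a_{\rho^{-1}(p)})$; ($\beta$2) $\beta_{x,(0,r_1,\dots,r_p)}(a_0,\dots,a_p)=\beta_{x,(r_1,\dots,r_p)}(a_1,\dots,a_p)$; ($\beta$3) $\beta_{x,{\underline r}}(\lambda a_1,a_2,\dots)=\lambda^{r_1}\beta_{x,{\underline r}}(a_1,a_2,\dots)$; ($\beta$4) for ${\underline q}\in\mathrm{Comp}_s(p)$, $\beta_{x,{\underline r}}$ at ($a_1$ repeated $q_1$ times, …, $a_s$ repeated $q_s$ times) equals $\beta_{\sum_{\sigma\in\Sigma_{{\underline q}\rhd{\underline r}}/\Sigma_{\underline r}}\sigma\cdot x,{\underline q}\rhd{\underline r}}(a_1,\dots,a_s)$;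 ($\beta$5) $\beta_{x,{\underline r}}(a_0+a_1,a_2,\dots)=\sum_{l+m=r_1}\beta_{x,{\underline r}\circ_1(l,m)}(a_0,a_1,a_2,\dots)$; ($\beta$6) $\beta_{\lambda x+y,{\underline r}}=\lambda\beta_{x,{\underline r}}+\beta_{y,{\underline r}}$. Morphisms: linear maps commuting with all operations. $\gamma(\mathcal M)$: objects $(A,\gamma)$ with $\gamma_{[x]_{\underline r},{\underline r}}:A^{\times p}\to A$ for ${\underline r}\in\mathrm{Comp}_p(n)$, $[x]_{\underline r}\in\Sigma_{\underline r}\backslash\mathcal B(n)$, satisfying ($\gamma$1) $\gamma_{[x]_{\underline r},{\underline r}}(a_1,\dots,a_p)=\gamma_{[\rho^*\cdot x]_{{\underline r}^\rho},{\underline r}^\rho}(a_{\rho^{-1}(1)},\dots,a_{\rho^{-1}(p)})$; ($\gamma$2) $\gamma_{[x]_{(0,{\underline r})},(0,{\underline r})}(a_0,a_1,\dots,a_p)=\gamma_{[x]_{\underline r},{\underline r}}(a_1,\dots,a_p)$; ($\gamma$3) $\gamma_{[x]_{\underline r},{\underline r}}(\lambda a_1,\dots)=\lambda^{r_1}\gamma_{[x]_{\underline r},{\underline r}}(a_1,\dots)$; ($\gamma$4) for ${\underline q}\in\mathrm{Comp}_s(p)$ and $x\in\mathcal B(n)$, $\gamma_{[x]_{\underline r},{\underline r}}$ at ($a_1$ repeated $q_1$ times, …, $a_s$ repeated $q_s$ times) equals $\frac{|\mathrm{Stab}_{{\underline q}\rhd{\underline r}}(x)|}{|\mathrm{Stab}_{\underline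 r}(x)|}\gamma_{[x]_{{\underline q}\rhd{\underline r}},{\underline q}\rhd{\underline r}}(a_1,\dots,a_s)$; ($\gamma$5) $\gamma_{[x]_{\underline r},{\underline r}}(a_0+a_1,a_2,\dots,a_p)=\sum_{l+m=r_1}\sum_{[y]\in\Sigma_{{\underline r}\circ_1(l,m)}\backslash\Omega_{\Sigma_{\underline r}}(x)}\gamma_{[y]_{{\underline r}\circ_1(l,m)},{\underline r}\circ_1(l,m)}(a_0,a_1,\dots,a_p)$. Morphisms: linear maps commuting with the operations. Integer coefficients are mapped into $\mathbb F$. *)

theory Defs
  imports Main "HOL.Vector_Spaces" "HOL-Combinatorics.Permutations"
begin

text \<open>Conventions: [n] is rendered 0-based as {..<n}; a composition r of n into p parts
  is a list of naturals of length p with sum n; its i-th block (0-based) is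
  the interval blk r i.  Tuples in A^p are lists of length p.\<close>

definition blk :: "nat list \<Rightarrow> nat \<Rightarrow> nat set" where
  "blk r i = {sum_list (take i r) ..< sum_list (take (Suc i) r)}"

definition SigmaC :: "nat list \<Rightarrow> (nat \<Rightarrow> nat) set" where
  "SigmaC r = {\<sigma>. \<sigma> permutes {..<sum_list r} \<and> (\<forall>i<length r. \<sigma> ` blk r i = blk r i)}"

definition orb :: "(nat \<Rightarrow> (nat \<Rightarrow> nat) \<Rightarrow> 'v \<Rightarrow> 'v) \<Rightarrow> nat list \<Rightarrow> 'v \<Rightarrow> 'v set" where
  "orb act r x = (\<lambda>\<sigma>. act (sum_list r) \<sigma> x) ` SigmaC r"

definition stab :: "(nat \<Rightarrow> (nat \<Rightarrow> nat) \<Rightarrow> 'v \<Rightarrow> 'v) \<Rightarrow> nat list \<Rightarrow> 'v \<Rightarrow> (nat \<Rightarrow> nat) set" where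
  "stab act r x = {\<sigma> \<in> SigmaC r. act (sum_list r) \<sigma> x = x}"

definition invs :: "(nat \<Rightarrow> 'v set) \<Rightarrow> (nat \<Rightarrow> (nat \<Rightarrow> nat) \<Rightarrow> 'v \<Rightarrow> 'v) \<Rightarrow> nat list \<Rightarrow> 'v set" where
  "invs Mn act r = {x \<in> Mn (sum_list r). \<forall>\<sigma>\<in>SigmaC r. act (sum_list r) \<sigma> x = x}"

definition classes :: "(nat \<Rightarrow> 'v set) \<Rightarrow> (nat \<Rightarrow> (nat \<Rightarrow> nat) \<Rightarrow> 'v \<Rightarrow> 'v) \<Rightarrow> nat list \<Rightarrow> 'v set set" where
  "classes B act r = {orb act r x | x. x \<in> B (sum_list r)}"

abbreviation cperm :: "(nat \<Rightarrow> nat) \<Rightarrow> 'a list \<Rightarrow> 'a list" where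
  "cperm \<rho> xs \<equiv> permute_list (inv \<rho>) xs"

text \<open>Block permutation rho^*: block i of r is moved, order preservingly, onto block rho(i) of r^rho.\<close>
definition blockperm :: "nat list \<Rightarrow> (nat \<Rightarrow> nat) \<Rightarrow> nat \<Rightarrow> nat" where
  "blockperm r \<rho> k =
     (if k < sum_list r then
        (let i = (THE i. i < length r \<and> k \<in> blk r i)
         in k - sum_list (take i r) + sum_list (take (\<rho> i) (cperm \<rho> r)))
      else k)"

definition coarsen :: "nat list \<Rightarrow> nat list \<Rightarrow> nat list" where
  "coarsen q r = map (\<lambda>j. sum_list (take (q ! j) (drop (sum_list (take j q)) r))) [0..<length q]"

definition rep :: "nat list \<Rightarrow> 'a list \<Rightarrow> 'a list" where
  "rep q as = concat (map (\<lambda>j. replicate (q ! j) (as ! j)) [0..<length q])"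

definition lcosets :: "(nat \<Rightarrow> nat) set \<Rightarrow> (nat \<Rightarrow> nat) set \<Rightarrow> (nat \<Rightarrow> nat) set set" where
  "lcosets G H = (\<lambda>\<sigma>. (\<lambda>\<tau>. \<sigma> \<circ> \<tau>) ` H) ` G"

text \<open>A Sigma-module (M(n) = subspace Mn n of an ambient F-vector space, with linear
  Sigma_n-action act n) whose components have Sigma_n-stable bases B n.\<close>
definition sigma_module_basis ::
  "('f::field \<Rightarrow> 'v::ab_group_add \<Rightarrow> 'v) \<Rightarrow> (nat \<Rightarrow> 'v set) \<Rightarrow> (nat \<Rightarrow> (nat \<Rightarrow> nat) \<Rightarrow> 'v \<Rightarrow> 'v)
    \<Rightarrow> (nat \<Rightarrow> 'v set) \<Rightarrow> bool" where
  "sigma_module_basis sM Mn act B \<longleftrightarrow>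
     vector_space sM \<and>
     (\<forall>n. module.subspace sM (Mn n)) \<and>
     (\<forall>n \<sigma>. \<sigma> permutes {..<n} \<longrightarrow>
        (\<forall>v\<in>Mn n. act n \<sigma> v \<in> Mn n) \<and>
        (\<forall>c v w. v \<in> Mn n \<and> w \<in> Mn n \<longrightarrow> act n \<sigma> (sM c v + w) = sM c (act n \<sigma> v) + act n \<sigma> w)) \<and>
     (\<forall>n. \<forall>v\<in>Mn n. act n id v = v) \<and>
     (\<forall>n \<sigma> \<tau>. \<sigma> permutes {..<n} \<and> \<tau> permutes {..<n} \<longrightarrow>
        (\<forall>v\<in>Mn n. act n (\<sigma> \<circ> \<tau>) v = act n \<sigma> (act n \<tau> v))) \<and>
     (\<forall>n. B n \<subseteq> Mn n \<and> \<not> module.dependent sM (B n) \<and> module.span sM (B n) = Mn n) \<and>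
     (\<forall>n \<sigma>. \<sigma> permutes {..<n} \<longrightarrow> act n \<sigma> ` B n \<subseteq> B n)"

text \<open>Objects of beta(M) with underlying vector space (UNIV, sA).  Operations are
  extensional: undefined outside their domain.\<close>
definition is_beta ::
  "('f::field \<Rightarrow> 'a::ab_group_add \<Rightarrow> 'a) \<Rightarrow> ('f \<Rightarrow> 'v::ab_group_add \<Rightarrow> 'v) \<Rightarrow> (nat \<Rightarrow> 'v set)
    \<Rightarrow> (nat \<Rightarrow> (nat \<Rightarrow> nat) \<Rightarrow> 'v \<Rightarrow> 'v) \<Rightarrow> ('v \<Rightarrow> nat list \<Rightarrow> 'a list \<Rightarrow> 'a) \<Rightarrow> bool" where
  "is_beta sA sM Mn act \<beta> \<longleftrightarrow>
     (\<forall>x r as. \<not> (x \<in> invs Mn act r \<and> length as = length r) \<longrightarrow> \<beta> x r as = undefined) \<and>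
     (\<forall>r x as \<rho>. x \<in> invs Mn act r \<and> length as = length r \<and> \<rho> permutes {..<length r} \<longrightarrow>
        \<beta> x r as = \<beta> (act (sum_list r) (blockperm r \<rho>) x) (cperm \<rho> r) (cperm \<rho> as)) \<and>
     (\<forall>r x a0 as. x \<in> invs Mn act (0 # r) \<and> length as = length r \<longrightarrow>
        \<beta> x (0 # r) (a0 # as) = \<beta> x r as) \<and>
     (\<forall>r x c a as. x \<in> invs Mn act r \<and> length (a # as) = length r \<longrightarrow>
        \<beta> x r (sA c a # as) = sA (c ^ hd r) (\<beta> x r (a # as))) \<and>
     (\<forall>r x q as. x \<in> invs Mn act r \<and> sum_list q = length r \<and> length as = length q \<longrightarrow>
        \<beta> x r (rep q as) =
          \<beta> (\<Sum>C\<in>lcosets (SigmaC (coarsen q r)) (SigmaC r). act (sum_list r) (SOME \<sigma>. \<sigma> \<in> C) x)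
            (coarsen q r) as) \<and>
     (\<forall>r x a0 a1 as. x \<in> invs Mn act r \<and> length (a1 # as) = length r \<longrightarrow>
        \<beta> x r ((a0 + a1) # as) =
          (\<Sum>l\<in>{..hd r}. \<beta> x (l # (hd r - l) # tl r) (a0 # a1 # as))) \<and>
     (\<forall>r x y c as. x \<in> invs Mn act r \<and> y \<in> invs Mn act r \<and> length as = length r \<longrightarrow>
        \<beta> (sM c x + y) r as = sA c (\<beta> x r as) + \<beta> y r as)"

text \<open>Objects of gamma(M) with underlying vector space (UNIV, sA); operations indexed
  by classes [x]_r (represented as the orbit sets), extensional.\<close>
definition is_gamma ::
  "('f::field \<Rightarrow> 'a::ab_group_add \<Rightarrow> 'a) \<Rightarrow> (nat \<Rightarrow> 'v set)
    \<Rightarrow> (nat \<Rightarrow> (nat \<Rightarrow> nat) \<Rightarrow> 'v \<Rightarrow> 'v) \<Rightarrow> ('v set \<Rightarrow> nat list \<Rightarrow> 'a list \<Rightarrow> 'a) \<Rightarrow> bool" where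
  "is_gamma sA B act \<gamma> \<longleftrightarrow>
     (\<forall>c r as. \<not> (c \<in> classes B act r \<and> length as = length r) \<longrightarrow> \<gamma> c r as = undefined) \<and>
     (\<forall>r x as \<rho>. x \<in> B (sum_list r) \<and> length as = length r \<and> \<rho> permutes {..<length r} \<longrightarrow>
        \<gamma> (orb act r x) r as =
          \<gamma> (orb act (cperm \<rho> r) (act (sum_list r) (blockperm r \<rho>) x)) (cperm \<rho> r) (cperm \<rho> as)) \<and>
     (\<forall>r x a0 as. x \<in> B (sum_list r) \<and> length as = length r \<longrightarrow>
        \<gamma> (orb act (0 # r) x) (0 # r) (a0 # as) = \<gamma> (orb act r x) r as) \<and>
     (\<forall>r x c a as. x \<in> B (sum_list r) \<and> length (a # as) = length r \<longrightarrow>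
        \<gamma> (orb act r x) r (sA c a # as) = sA (c ^ hd r) (\<gamma> (orb act r x) r (a # as))) \<and>
     (\<forall>r x q as. x \<in> B (sum_list r) \<and> sum_list q = length r \<and> length as = length q \<longrightarrow>
        \<gamma> (orb act r x) r (rep q as) =
          sA (of_nat (card (stab act (coarsen q r) x) div card (stab act r x)))
             (\<gamma> (orb act (coarsen q r) x) (coarsen q r) as)) \<and>
     (\<forall>r x a0 a1 as. x \<in> B (sum_list r) \<and> length (a1 # as) = length r \<longrightarrow>
        \<gamma> (orb act r x) r ((a0 + a1) # as) =
          (\<Sum>l\<in>{..hd r}. \<Sum>c\<in>{orb act (l # (hd r - l) # tl r) y | y. y \<in> orb act r x}.
              \<gamma> c (l # (hd r - l) # tl r) (a0 # a1 # as)))"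

definition beta_hom ::
  "('f::field \<Rightarrow> 'a::ab_group_add \<Rightarrow> 'a) \<Rightarrow> ('f \<Rightarrow> 'b::ab_group_add \<Rightarrow> 'b) \<Rightarrow> (nat \<Rightarrow> 'v set)
    \<Rightarrow> (nat \<Rightarrow> (nat \<Rightarrow> nat) \<Rightarrow> 'v \<Rightarrow> 'v) \<Rightarrow> ('v \<Rightarrow> nat list \<Rightarrow> 'a list \<Rightarrow> 'a)
    \<Rightarrow> ('v \<Rightarrow> nat list \<Rightarrow> 'b list \<Rightarrow> 'b) \<Rightarrow> ('a \<Rightarrow> 'b) \<Rightarrow> bool" where
  "beta_hom sA sB Mn act \<beta> \<beta>' f \<longleftrightarrow> Vector_Spaces.linear sA sB f \<and>
     (\<forall>x r as. x \<in> invs Mn act r \<and> length as = length r \<longrightarrow> f (\<beta> x r as) = \<beta>' x r (map f as))"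

definition gamma_hom ::
  "('f::field \<Rightarrow> 'a::ab_group_add \<Rightarrow> 'a) \<Rightarrow> ('f \<Rightarrow> 'b::ab_group_add \<Rightarrow> 'b) \<Rightarrow> (nat \<Rightarrow> 'v set)
    \<Rightarrow> (nat \<Rightarrow> (nat \<Rightarrow> nat) \<Rightarrow> 'v \<Rightarrow> 'v) \<Rightarrow> ('v set \<Rightarrow> nat list \<Rightarrow> 'a list \<Rightarrow> 'a)
    \<Rightarrow> ('v set \<Rightarrow> nat list \<Rightarrow> 'b list \<Rightarrow> 'b) \<Rightarrow> ('a \<Rightarrow> 'b) \<Rightarrow> bool" where
  "gamma_hom sA sB B act \<gamma> \<gamma>' f \<longleftrightarrow> Vector_Spaces.linear sA sB f \<and>
     (\<forall>c r as. c \<in> classes B act r \<and> length as = length r \<longrightarrow> f (\<gamma> c r as) = \<gamma>' c r (map f as))"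

text \<open>The functor P_M on objects: gamma_{[x]_r, r} = beta_{O([x]_r), r}, where O([x]_r) is
  the sum of the elements of the orbit.\<close>
definition P_M :: "(nat \<Rightarrow> 'v::ab_group_add set) \<Rightarrow> (nat \<Rightarrow> (nat \<Rightarrow> nat) \<Rightarrow> 'v \<Rightarrow> 'v)
    \<Rightarrow> ('v \<Rightarrow> nat list \<Rightarrow> 'a list \<Rightarrow> 'a) \<Rightarrow> ('v set \<Rightarrow> nat list \<Rightarrow> 'a list \<Rightarrow> 'a)" where
  "P_M B act \<beta> c r as =
     (if c \<in> classes B act r \<and> length as = length r then \<beta> (\<Sum>y\<in>c. y) r as else undefined)"

end

theory Submission
  imports Defs
begin


fun bo :: "nat list \<Rightarrow> nat \<Rightarrow> nat" where
  "bo [] k = 0"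
| "bo (a # r) k = (if k < a then 0 else Suc (bo r (k - a)))"

lemma blk_Cons0: "blk (a # r) 0 = {0..<a}"
  by (simp add: blk_def)

lemma blk_ConsS: "blk (a # r) (Suc i) = {a + sum_list (take i r)..<a + sum_list (take (Suc i) r)}"
  by (simp add: blk_def del: take_Suc)

lemma blk_iff: "k \<in> blk r i \<longleftrightarrow> k < sum_list r \<and> bo r k = i"
proof (induction r arbitrary: k i)
  case Nil
  then show ?case by (simp add: blk_def)
next
  case (Cons a r)
  show ?case
  proof (cases i)
    case 0
    then show ?thesis by (auto simp: blk_Cons0)
  next
    case (Suc j)
    have "k \<in> blk (a # r) (Suc j) \<longleftrightarrow> a \<le> k \<and> k - a \<in> blk r j"
      unfolding blk_ConsS by (auto simp: blk_def)
    then show ?thesis using Cons.IH[of "k - a" j] Suc by auto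
  qed
qed

lemma bo_less: "k < sum_list r \<Longrightarrow> bo r k < length r"
  by (induction r arbitrary: k) auto

lemma bo_drop: "a \<le> length r \<Longrightarrow> sum_list (take a r) \<le> k \<Longrightarrow>
   bo r k = a + bo (drop a r) (k - sum_list (take a r))"
proof (induction r arbitrary: a k)
  case Nil then show ?case by simp
next
  case (Cons x r)
  then show ?case by (cases a) (auto simp: diff_diff_add)
qed

lemma bo_take_less: "k < sum_list (take a r) \<Longrightarrow> bo r k < a"
proof (induction r arbitrary: a k)
  case Nil then show ?case by simp
next
  case (Cons x r)
  show ?case
  proof (cases a)
    case 0 then show ?thesis using Cons.prems by simp
  next
    case (Suc b)
    then show ?thesis using Cons.prems Cons.IH[of "k - x" b] by auto
  qed
qed

lemma coarsen_Nil: "coarsen [] r = []"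
  by (simp add: coarsen_def)

lemma coarsen_Cons: "coarsen (a # q) r = sum_list (take a r) # coarsen q (drop a r)"
  unfolding coarsen_def
  by (simp add: map_upt_Suc add.commute drop_drop del: upt_Suc)

lemma length_coarsen: "length (coarsen q r) = length q"
  by (simp add: coarsen_def)

lemma sum_coarsen: "sum_list q = length r \<Longrightarrow> sum_list (coarsen q r) = sum_list r"
proof (induction q arbitrary: r)
  case Nil then show ?case by (simp add: coarsen_Nil)
next
  case (Cons a q)
  have "sum_list (take a r) + sum_list (drop a r) = sum_list r"
    by (metis append_take_drop_id sum_list_append)
  then show ?case using Cons by (simp add: coarsen_Cons)
qed

lemma bo_coarsen: "sum_list q = length r \<Longrightarrow> k < sum_list r \<Longrightarrow>
   bo (coarsen q r) k = bo q (bo r k)"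
proof (induction q arbitrary: r k)
  case Nil then show ?case by (simp add: coarsen_Nil bo_less)
next
  case (Cons a q)
  have al: "a \<le> length r" using Cons.prems by simp
  show ?case
  proof (cases "k < sum_list (take a r)")
    case True
    then show ?thesis using bo_take_less[OF True] by (simp add: coarsen_Cons)
  next
    case False
    have s: "sum_list (take a r) + sum_list (drop a r) = sum_list r"
      by (metis append_take_drop_id sum_list_append)
    have e: "bo r k = a + bo (drop a r) (k - sum_list (take a r))"
      using bo_drop[OF al] False by simp
    have "bo (coarsen q (drop a r)) (k - sum_list (take a r)) = bo q (bo (drop a r) (k - sum_list (take a r)))"
      using Cons.IH[of "drop a r" "k - sum_list (take a r)"] Cons.prems s False by auto
    then show ?thesis using False e by (simp add: coarsen_Cons)
  qed
qed



lemma SigmaC_alt: "SigmaC r = {\<sigma>. \<sigma> permutes {..<sum_list r} \<and> (\<forall>k<sum_list r. bo r (\<sigma> k) = bo r k)}"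
proof safe
  fix \<sigma> assume s: "\<sigma> \<in> SigmaC r"
  then show p: "\<sigma> permutes {..<sum_list r}" by (simp add: SigmaC_def)
  fix k assume k: "k < sum_list r"
  have i: "bo r k < length r" using bo_less[OF k] .
  have "k \<in> blk r (bo r k)" using k by (simp add: blk_iff)
  then have "\<sigma> k \<in> \<sigma> ` blk r (bo r k)" by blast
  also have "\<dots> = blk r (bo r k)" using s i by (simp add: SigmaC_def)
  finally show "bo r (\<sigma> k) = bo r k" by (simp add: blk_iff)
next
  fix \<sigma> assume p: "\<sigma> permutes {..<sum_list r}" and b: "\<forall>k<sum_list r. bo r (\<sigma> k) = bo r k"
  show "\<sigma> \<in> SigmaC r" unfolding SigmaC_def
  proof (intro CollectI conjI allI impI p)
    fix i assume "i < length r"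
    show "\<sigma> ` blk r i = blk r i"
    proof
      show "\<sigma> ` blk r i \<subseteq> blk r i"
        using b permutes_in_image[OF p] by (auto simp: blk_iff)
      show "blk r i \<subseteq> \<sigma> ` blk r i"
      proof
        fix k assume k: "k \<in> blk r i"
        have kn: "k < sum_list r" using k by (simp add: blk_iff)
        have iv: "inv \<sigma> k < sum_list r"
          using permutes_in_image[OF permutes_inv[OF p]] kn by simp
        have "bo r (\<sigma> (inv \<sigma> k)) = bo r (inv \<sigma> k)" using b iv by blast
        then have "inv \<sigma> k \<in> blk r i" using k iv by (simp add: blk_iff permutes_inverses[OF p])
        then show "k \<in> \<sigma> ` blk r i" using permutes_inverses(1)[OF p, of k] by (metis image_eqI)
      qed
    qed
  qed
qed

lemma SigmaC_perm: "\<sigma> \<in> SigmaC r \<Longrightarrow> \<sigma> permutes {..<sum_list r}"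
  by (simp add: SigmaC_def)

lemma SigmaC_id: "id \<in> SigmaC r"
  by (simp add: SigmaC_alt permutes_id)

lemma SigmaC_comp: "\<sigma> \<in> SigmaC r \<Longrightarrow> \<tau> \<in> SigmaC r \<Longrightarrow> \<sigma> \<circ> \<tau> \<in> SigmaC r"
  unfolding SigmaC_alt
proof safe
  assume p1: "\<sigma> permutes {..<sum_list r}" and b1: "\<forall>k<sum_list r. bo r (\<sigma> k) = bo r k"
    and p2: "\<tau> permutes {..<sum_list r}" and b2: "\<forall>k<sum_list r. bo r (\<tau> k) = bo r k"
  show "\<sigma> \<circ> \<tau> permutes {..<sum_list r}" using permutes_compose[OF p2 p1] .
  fix k assume k: "k < sum_list r"
  have "\<tau> k < sum_list r" using permutes_in_image[OF p2] k by simp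
  then show "bo r ((\<sigma> \<circ> \<tau>) k) = bo r k" using b1 b2 k by simp
qed

lemma SigmaC_inv: "\<sigma> \<in> SigmaC r \<Longrightarrow> inv \<sigma> \<in> SigmaC r"
  unfolding SigmaC_alt
proof safe
  assume p: "\<sigma> permutes {..<sum_list r}" and b: "\<forall>k<sum_list r. bo r (\<sigma> k) = bo r k"
  show "inv \<sigma> permutes {..<sum_list r}" using permutes_inv[OF p] .
  fix k assume k: "k < sum_list r"
  have "inv \<sigma> k < sum_list r" using permutes_in_image[OF permutes_inv[OF p]] k by simp
  then have "bo r (\<sigma> (inv \<sigma> k)) = bo r (inv \<sigma> k)" using b by blast
  then show "bo r (inv \<sigma> k) = bo r k" by (simp add: permutes_inverses[OF p])
qed

lemma SigmaC_finite: "finite (SigmaC r)"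
  by (rule finite_subset[OF _ finite_permutations[of "{..<sum_list r}"]]) (auto simp: SigmaC_def)

lemma SigmaC_refine:
  assumes "sum_list r' = sum_list r" "\<And>k. k < sum_list r \<Longrightarrow> bo r k = g (bo r' k)"
  shows "SigmaC r' \<subseteq> SigmaC r"
  unfolding SigmaC_alt
proof safe
  fix x assume p: "x permutes {..<sum_list r'}" and b: "\<forall>k<sum_list r'. bo r' (x k) = bo r' k"
  then show "x permutes {..<sum_list r}" using assms(1) by simp
  fix k assume k: "k < sum_list r"
  have "x k < sum_list r" using permutes_in_image[OF p] k assms(1) by simp
  then show "bo r (x k) = bo r k" using assms b k by simp
qed

lemma SigmaC_coarsen: "sum_list q = length r \<Longrightarrow> SigmaC r \<subseteq> SigmaC (coarsen q r)"
  by (rule SigmaC_refine[where g = "bo q"]) (auto simp: sum_coarsen bo_coarsen)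

lemma SigmaC_0: "SigmaC (0 # r) = SigmaC r"
proof
  show "SigmaC (0 # r) \<subseteq> SigmaC r"
    by (rule SigmaC_refine[where g = "\<lambda>j. j - 1"]) auto
  show "SigmaC r \<subseteq> SigmaC (0 # r)"
    by (rule SigmaC_refine[where g = Suc]) auto
qed

lemma SigmaC_split:
  assumes "r \<noteq> []" "l \<le> hd r"
  shows "SigmaC (l # (hd r - l) # tl r) \<subseteq> SigmaC r"
proof -
  obtain a t where r: "r = a # t" using assms by (cases r) auto
  show ?thesis
    by (rule SigmaC_refine[where g = "\<lambda>j. j - 1"]) (use assms r in auto)
qed

lemma sum_split: "(r::nat list) \<noteq> [] \<Longrightarrow> l \<le> hd r \<Longrightarrow> sum_list (l # (hd r - l) # tl r) = sum_list r"
  by (cases r) (auto simp: add.assoc[symmetric] le_add_diff_inverse)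

lemma sum_cperm: "\<rho> permutes {..<length r} \<Longrightarrow> sum_list (cperm \<rho> r) = sum_list (r :: nat list)"
  by (metis mset_permute_list permutes_inv sum_mset_sum_list)

lemma take_Suc_sum: "i < length xs \<Longrightarrow> sum_list (take (Suc i) xs) = sum_list (take i xs) + xs ! i"
  by (simp add: take_Suc_conv_app_nth)

lemma blk_bounds: "k \<in> blk r i \<Longrightarrow> sum_list (take i r) \<le> k \<and> k < sum_list (take i r) + r ! i"
proof -
  assume k: "k \<in> blk r i"
  then have "i < length r" by (metis blk_iff bo_less)
  then show ?thesis using k by (simp add: blk_def take_Suc_sum)
qed

lemma the_blk: "k < sum_list r \<Longrightarrow> (THE i. i < length r \<and> k \<in> blk r i) = bo r k"
  by (rule the_equality) (auto simp: blk_iff bo_less)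

lemma blockperm_eq:
  "k < sum_list r \<Longrightarrow> blockperm r \<rho> k =
     k - sum_list (take (bo r k) r) + sum_list (take (\<rho> (bo r k)) (cperm \<rho> r))"
  by (simp add: blockperm_def the_blk Let_def)

lemma blockperm_blk:
  assumes p: "\<rho> permutes {..<length r}" and k: "k < sum_list r"
  shows "blockperm r \<rho> k \<in> blk (cperm \<rho> r) (\<rho> (bo r k))"
proof -
  let ?i = "bo r k"
  have i: "?i < length r" using bo_less[OF k] .
  have ri: "\<rho> ?i < length r" using permutes_in_image[OF p] i by simp
  have nth: "cperm \<rho> r ! (\<rho> ?i) = r ! ?i"
    using permute_list_nth[OF permutes_inv[OF p], of "\<rho> ?i"] ri by (simp add: permutes_inverses[OF p])
  have kb: "sum_list (take ?i r) \<le> k \<and> k < sum_list (take ?i r) + r ! ?i"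
    using blk_bounds[of k r ?i] k by (simp add: blk_iff)
  show ?thesis
    unfolding blockperm_eq[OF k] blk_def
    using kb take_Suc_sum[of "\<rho> ?i" "cperm \<rho> r"] ri nth by auto
qed

lemma blockperm_bo:
  assumes p: "\<rho> permutes {..<length r}" and k: "k < sum_list r"
  shows "bo (cperm \<rho> r) (blockperm r \<rho> k) = \<rho> (bo r k)"
    and "blockperm r \<rho> k < sum_list r"
  using blockperm_blk[OF p k] sum_cperm[OF p] by (auto simp: blk_iff)

lemma blockperm_permutes:
  assumes p: "\<rho> permutes {..<length r}"
  shows "blockperm r \<rho> permutes {..<sum_list r}"
proof (rule bij_imp_permutes)
  let ?\<pi> = "blockperm r \<rho>"
  have inj: "inj_on ?\<pi> {..<sum_list r}"
  proof (rule inj_onI)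
    fix k k' assume k: "k \<in> {..<sum_list r}" and k': "k' \<in> {..<sum_list r}" and e: "?\<pi> k = ?\<pi> k'"
    have "\<rho> (bo r k) = \<rho> (bo r k')" using blockperm_bo(1)[OF p] k k' e by (metis lessThan_iff)
    then have b: "bo r k = bo r k'" using permutes_inj[OF p] by (meson injD)
    have "sum_list (take (bo r k) r) \<le> k" "sum_list (take (bo r k') r) \<le> k'"
      using blk_bounds[of k r "bo r k"] blk_bounds[of k' r "bo r k'"] k k' by (auto simp: blk_iff)
    then show "k = k'" using e b k k' by (simp add: blockperm_eq)
  qed
  have "?\<pi> ` {..<sum_list r} \<subseteq> {..<sum_list r}" using blockperm_bo(2)[OF p] by auto
  then have "?\<pi> ` {..<sum_list r} = {..<sum_list r}" using endo_inj_surj inj by blast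
  then show "bij_betw ?\<pi> {..<sum_list r} {..<sum_list r}" using inj by (simp add: bij_betw_def)
  show "\<And>x. x \<notin> {..<sum_list r} \<Longrightarrow> ?\<pi> x = x" by (simp add: blockperm_def)
qed

lemma blockperm_conj:
  assumes p: "\<rho> permutes {..<length r}" and s: "\<sigma> \<in> SigmaC r"
  shows "blockperm r \<rho> \<circ> \<sigma> \<circ> inv (blockperm r \<rho>) \<in> SigmaC (cperm \<rho> r)"
proof -
  let ?\<pi> = "blockperm r \<rho>"
  have pp: "?\<pi> permutes {..<sum_list r}" using blockperm_permutes[OF p] .
  have sp: "\<sigma> permutes {..<sum_list r}" and sb: "\<forall>k<sum_list r. bo r (\<sigma> k) = bo r k"
    using s by (auto simp: SigmaC_alt)
  show ?thesis unfolding SigmaC_alt sum_cperm[OF p]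
  proof (intro CollectI conjI allI impI)
    show "?\<pi> \<circ> \<sigma> \<circ> inv ?\<pi> permutes {..<sum_list r}"
      by (intro permutes_compose permutes_inv pp sp)
    fix k assume k: "k < sum_list r"
    define j where "j = inv ?\<pi> k"
    have j: "j < sum_list r" using permutes_in_image[OF permutes_inv[OF pp]] k by (simp add: j_def)
    have kj: "k = ?\<pi> j" by (simp add: j_def permutes_inverses[OF pp])
    have sj: "\<sigma> j < sum_list r" using permutes_in_image[OF sp] j by simp
    have "bo (cperm \<rho> r) ((?\<pi> \<circ> \<sigma> \<circ> inv ?\<pi>) k) = bo (cperm \<rho> r) (?\<pi> (\<sigma> j))"
      by (simp add: j_def)
    also have "\<dots> = \<rho> (bo r (\<sigma> j))" using blockperm_bo(1)[OF p sj] .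
    also have "\<dots> = \<rho> (bo r j)" using sb j by simp
    also have "\<dots> = bo (cperm \<rho> r) k" using blockperm_bo(1)[OF p j] kj by simp
    finally show "bo (cperm \<rho> r) ((?\<pi> \<circ> \<sigma> \<circ> inv ?\<pi>) k) = bo (cperm \<rho> r) k" .
  qed
qed

lemma blockperm_conj_inv:
  assumes p: "\<rho> permutes {..<length r}" and s: "\<tau> \<in> SigmaC (cperm \<rho> r)"
  shows "inv (blockperm r \<rho>) \<circ> \<tau> \<circ> blockperm r \<rho> \<in> SigmaC r"
proof -
  let ?\<pi> = "blockperm r \<rho>"
  have pp: "?\<pi> permutes {..<sum_list r}" using blockperm_permutes[OF p] .
  have sp: "\<tau> permutes {..<sum_list r}" and sb: "\<forall>k<sum_list r. bo (cperm \<rho> r) (\<tau> k) = bo (cperm \<rho> r) k"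
    using s by (auto simp: SigmaC_alt sum_cperm[OF p])
  show ?thesis unfolding SigmaC_alt
  proof (intro CollectI conjI allI impI)
    show "inv ?\<pi> \<circ> \<tau> \<circ> ?\<pi> permutes {..<sum_list r}"
      by (intro permutes_compose permutes_inv pp sp)
    fix k assume k: "k < sum_list r"
    define j where "j = inv ?\<pi> (\<tau> (?\<pi> k))"
    have pk: "?\<pi> k < sum_list r" using permutes_in_image[OF pp] k by simp
    have tk: "\<tau> (?\<pi> k) < sum_list r" using permutes_in_image[OF sp] pk by simp
    have j: "j < sum_list r" using permutes_in_image[OF permutes_inv[OF pp]] tk by (simp add: j_def)
    have pj: "?\<pi> j = \<tau> (?\<pi> k)" by (simp add: j_def permutes_inverses[OF pp])
    have "\<rho> (bo r j) = bo (cperm \<rho> r) (?\<pi> j)" using blockperm_bo(1)[OF p j] by simp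
    also have "\<dots> = bo (cperm \<rho> r) (?\<pi> k)" using pj sb pk by simp
    also have "\<dots> = \<rho> (bo r k)" using blockperm_bo(1)[OF p k] .
    finally have "bo r j = bo r k" using permutes_inj[OF p] by (meson injD)
    then show "bo r ((inv ?\<pi> \<circ> \<tau> \<circ> ?\<pi>) k) = bo r k" by (simp add: j_def)
  qed
qed



definition osum :: "'v::ab_group_add set \<Rightarrow> 'v" where "osum c = (\<Sum>y\<in>c. y)"

locale SM =
  fixes sM :: "'f::field \<Rightarrow> 'v::ab_group_add \<Rightarrow> 'v"
    and Mn B :: "nat \<Rightarrow> 'v set"
    and act :: "nat \<Rightarrow> (nat \<Rightarrow> nat) \<Rightarrow> 'v \<Rightarrow> 'v"
  assumes smb: "sigma_module_basis sM Mn act B"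
begin

sublocale M: vector_space sM
  using smb by (simp add: sigma_module_basis_def)

lemma sub: "M.subspace (Mn n)"
  using smb by (simp add: sigma_module_basis_def)

lemma act_Mn: "\<sigma> permutes {..<n} \<Longrightarrow> v \<in> Mn n \<Longrightarrow> act n \<sigma> v \<in> Mn n"
  using smb by (simp add: sigma_module_basis_def)

lemma act_lin: "\<sigma> permutes {..<n} \<Longrightarrow> v \<in> Mn n \<Longrightarrow> w \<in> Mn n \<Longrightarrow>
    act n \<sigma> (sM c v + w) = sM c (act n \<sigma> v) + act n \<sigma> w"
  using smb by (simp add: sigma_module_basis_def)

lemma act_id: "v \<in> Mn n \<Longrightarrow> act n id v = v"
  using smb by (simp add: sigma_module_basis_def)

lemma act_comp: "\<sigma> permutes {..<n} \<Longrightarrow> \<tau> permutes {..<n} \<Longrightarrow> v \<in> Mn n \<Longrightarrow>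
    act n (\<sigma> \<circ> \<tau>) v = act n \<sigma> (act n \<tau> v)"
  using smb by (simp add: sigma_module_basis_def)

lemma B_sub: "B n \<subseteq> Mn n"
  and B_indep: "M.independent (B n)"
  and B_span: "M.span (B n) = Mn n"
  using smb by (simp_all add: sigma_module_basis_def)

lemma act_B: "\<sigma> permutes {..<n} \<Longrightarrow> b \<in> B n \<Longrightarrow> act n \<sigma> b \<in> B n"
  using smb unfolding sigma_module_basis_def by blast

lemma Mn_zero: "0 \<in> Mn n" using M.subspace_0[OF sub] .
lemma Mn_add: "v \<in> Mn n \<Longrightarrow> w \<in> Mn n \<Longrightarrow> v + w \<in> Mn n" using M.subspace_add[OF sub] .
lemma Mn_scale: "v \<in> Mn n \<Longrightarrow> sM c v \<in> Mn n" using M.subspace_scale[OF sub] .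
lemma Mn_sum: "(\<And>i. i \<in> I \<Longrightarrow> f i \<in> Mn n) \<Longrightarrow> sum f I \<in> Mn n" using M.subspace_sum[OF sub] .
lemma B_Mn: "b \<in> B n \<Longrightarrow> b \<in> Mn n" using B_sub by blast

lemma act_add: "\<sigma> permutes {..<n} \<Longrightarrow> v \<in> Mn n \<Longrightarrow> w \<in> Mn n \<Longrightarrow>
    act n \<sigma> (v + w) = act n \<sigma> v + act n \<sigma> w"
  using act_lin[of \<sigma> n v w 1] by simp

lemma act_zero: "\<sigma> permutes {..<n} \<Longrightarrow> act n \<sigma> 0 = 0"
  using act_add[of \<sigma> n 0 0] Mn_zero by simp

lemma act_scale: "\<sigma> permutes {..<n} \<Longrightarrow> v \<in> Mn n \<Longrightarrow> act n \<sigma> (sM c v) = sM c (act n \<sigma> v)"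
  using act_lin[of \<sigma> n v 0 c] Mn_zero by (simp add: act_zero)

lemma act_sum: "\<sigma> permutes {..<n} \<Longrightarrow> (\<And>i. i \<in> I \<Longrightarrow> f i \<in> Mn n) \<Longrightarrow>
    act n \<sigma> (sum f I) = (\<Sum>i\<in>I. act n \<sigma> (f i))"
proof (induction I rule: infinite_finite_induct)
  case (infinite A) then show ?case by (simp add: act_zero)
next
  case empty then show ?case by (simp add: act_zero)
next
  case (insert x F)
  then show ?case by (simp add: act_add Mn_sum)
qed

lemma act_inv1: "\<sigma> permutes {..<n} \<Longrightarrow> v \<in> Mn n \<Longrightarrow> act n (inv \<sigma>) (act n \<sigma> v) = v"
  using act_comp[of "inv \<sigma>" n \<sigma> v] permutes_inv[of \<sigma>] permutes_inv_o(2)[of \<sigma>] act_id by simp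

lemma act_inv2: "\<sigma> permutes {..<n} \<Longrightarrow> v \<in> Mn n \<Longrightarrow> act n \<sigma> (act n (inv \<sigma>) v) = v"
  using act_comp[of \<sigma> n "inv \<sigma>" v] permutes_inv[of \<sigma>] permutes_inv_o(1)[of \<sigma>] act_id by simp

lemma act_inj: "\<sigma> permutes {..<n} \<Longrightarrow> inj_on (act n \<sigma>) (Mn n)"
  by (metis act_inv1 inj_onI)

lemma act_B_eq: "\<sigma> permutes {..<n} \<Longrightarrow> act n \<sigma> ` B n = B n"
proof
  assume p: "\<sigma> permutes {..<n}"
  show "act n \<sigma> ` B n \<subseteq> B n" using act_B[OF p] by blast
  show "B n \<subseteq> act n \<sigma> ` B n"
  proof
    fix b assume b: "b \<in> B n"
    have "act n (inv \<sigma>) b \<in> B n" using act_B[OF permutes_inv[OF p] b] .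
    moreover have "b = act n \<sigma> (act n (inv \<sigma>) b)" using act_inv2[OF p B_Mn[OF b]] by simp
    ultimately show "b \<in> act n \<sigma> ` B n" by blast
  qed
qed

lemma orb_sub: "x \<in> B (sum_list r) \<Longrightarrow> orb act r x \<subseteq> B (sum_list r)"
  unfolding orb_def using act_B SigmaC_perm by blast

lemma orb_finite: "finite (orb act r x)"
  unfolding orb_def using SigmaC_finite by simp

lemma orb_self: "x \<in> Mn (sum_list r) \<Longrightarrow> x \<in> orb act r x"
  unfolding orb_def using SigmaC_id act_id by (metis image_eqI)

lemma orb_act: "x \<in> Mn (sum_list r) \<Longrightarrow> \<sigma> \<in> SigmaC r \<Longrightarrow> orb act r (act (sum_list r) \<sigma> x) = orb act r x"
proof
  assume x: "x \<in> Mn (sum_list r)" and s: "\<sigma> \<in> SigmaC r"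
  have p: "\<sigma> permutes {..<sum_list r}" using SigmaC_perm[OF s] .
  show "orb act r (act (sum_list r) \<sigma> x) \<subseteq> orb act r x"
  proof
    fix y assume "y \<in> orb act r (act (sum_list r) \<sigma> x)"
    then obtain \<tau> where t: "\<tau> \<in> SigmaC r" "y = act (sum_list r) \<tau> (act (sum_list r) \<sigma> x)"
      by (auto simp: orb_def)
    then have "y = act (sum_list r) (\<tau> \<circ> \<sigma>) x" using act_comp[OF SigmaC_perm[OF t(1)] p x] by simp
    then show "y \<in> orb act r x" using SigmaC_comp[OF t(1) s] by (auto simp: orb_def)
  qed
  show "orb act r x \<subseteq> orb act r (act (sum_list r) \<sigma> x)"
  proof
    fix y assume "y \<in> orb act r x"
    then obtain \<tau> where t: "\<tau> \<in> SigmaC r" "y = act (sum_list r) \<tau> x"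
      by (auto simp: orb_def)
    have tp: "\<tau> permutes {..<sum_list r}" using SigmaC_perm[OF t(1)] .
    have "act (sum_list r) (\<tau> \<circ> inv \<sigma>) (act (sum_list r) \<sigma> x) = act (sum_list r) \<tau> (act (sum_list r) (inv \<sigma>) (act (sum_list r) \<sigma> x))"
      using act_comp[OF tp permutes_inv[OF p] act_Mn[OF p x]] .
    also have "\<dots> = y" using act_inv1[OF p x] t by simp
    finally show "y \<in> orb act r (act (sum_list r) \<sigma> x)"
      using SigmaC_comp[OF t(1) SigmaC_inv[OF s]] unfolding orb_def by (metis image_eqI)
  qed
qed

lemma orb_mem: "x \<in> Mn (sum_list r) \<Longrightarrow> y \<in> orb act r x \<Longrightarrow> orb act r y = orb act r x"
  using orb_act unfolding orb_def by blast

lemma orb_disj: "x \<in> Mn (sum_list r) \<Longrightarrow> y \<in> Mn (sum_list r) \<Longrightarrow>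
    orb act r x \<inter> orb act r y \<noteq> {} \<Longrightarrow> orb act r x = orb act r y"
proof -
  assume x: "x \<in> Mn (sum_list r)" and y: "y \<in> Mn (sum_list r)" and ne: "orb act r x \<inter> orb act r y \<noteq> {}"
  then obtain z where z: "z \<in> orb act r x" "z \<in> orb act r y" by blast
  then show ?thesis using orb_mem[OF x z(1)] orb_mem[OF y z(2)] by simp
qed

lemma orb_image: "x \<in> Mn (sum_list r) \<Longrightarrow> \<sigma> \<in> SigmaC r \<Longrightarrow>
    act (sum_list r) \<sigma> ` orb act r x = orb act r x"
proof -
  assume x: "x \<in> Mn (sum_list r)" and s: "\<sigma> \<in> SigmaC r"
  have "act (sum_list r) \<sigma> ` orb act r x = orb act r (act (sum_list r) \<sigma> x)"
    unfolding orb_def image_image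
  proof (rule set_eqI, rule iffI)
    fix y assume "y \<in> (\<lambda>xa. act (sum_list r) \<sigma> (act (sum_list r) xa x)) ` SigmaC r"
    then obtain \<tau> where t: "\<tau> \<in> SigmaC r" "y = act (sum_list r) \<sigma> (act (sum_list r) \<tau> x)" by blast
    then have "y = act (sum_list r) (\<sigma> \<circ> \<tau>) x"
      using act_comp[OF SigmaC_perm[OF s] SigmaC_perm[OF t(1)] x] by simp
    then show "y \<in> (\<lambda>\<tau>. act (sum_list r) \<tau> (act (sum_list r) \<sigma> x)) ` SigmaC r"
      using orb_act[OF x s] SigmaC_comp[OF s t(1)] unfolding orb_def by (metis image_eqI)
  next
    fix y assume "y \<in> (\<lambda>\<tau>. act (sum_list r) \<tau> (act (sum_list r) \<sigma> x)) ` SigmaC r"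
    then have "y \<in> orb act r x" using orb_act[OF x s] unfolding orb_def by simp
    then obtain \<tau> where t: "\<tau> \<in> SigmaC r" "y = act (sum_list r) \<tau> x" by (auto simp: orb_def)
    have "y = act (sum_list r) \<sigma> (act (sum_list r) (inv \<sigma> \<circ> \<tau>) x)"
      using act_comp[OF permutes_inv[OF SigmaC_perm[OF s]] SigmaC_perm[OF t(1)] x]
        act_inv2[OF SigmaC_perm[OF s] act_Mn[OF SigmaC_perm[OF t(1)] x]] t by simp
    then show "y \<in> (\<lambda>xa. act (sum_list r) \<sigma> (act (sum_list r) xa x)) ` SigmaC r"
      using SigmaC_comp[OF SigmaC_inv[OF s] t(1)] by blast
  qed
  then show ?thesis using orb_act[OF x s] by simp
qed

lemma classes_iff: "c \<in> classes B act r \<longleftrightarrow> (\<exists>x\<in>B (sum_list r). c = orb act r x)"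
  by (auto simp: classes_def)

lemma class_sub: "c \<in> classes B act r \<Longrightarrow> c \<subseteq> B (sum_list r)"
  using orb_sub by (auto simp: classes_def)

lemma class_finite: "c \<in> classes B act r \<Longrightarrow> finite c"
  using orb_finite by (auto simp: classes_def)

lemma class_ne: "c \<in> classes B act r \<Longrightarrow> c \<noteq> {}"
  unfolding classes_def using orb_self B_Mn by blast

lemma class_orb: "c \<in> classes B act r \<Longrightarrow> b \<in> c \<Longrightarrow> c = orb act r b"
proof -
  assume c: "c \<in> classes B act r" and b: "b \<in> c"
  then obtain x where x: "x \<in> B (sum_list r)" "c = orb act r x" by (auto simp: classes_def)
  then show ?thesis using orb_mem[OF B_Mn[OF x(1)], of b] b by simp
qed

lemma invs_subspace: "M.subspace (invs Mn act r)"
  unfolding M.subspace_def invs_def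
  by (auto simp: Mn_zero Mn_add Mn_scale act_zero act_add act_scale SigmaC_perm)

lemma osum_Mn: "c \<in> classes B act r \<Longrightarrow> osum c \<in> Mn (sum_list r)"
  unfolding osum_def using class_sub B_Mn by (blast intro: Mn_sum)

lemma osum_invs: "c \<in> classes B act r \<Longrightarrow> osum c \<in> invs Mn act r"
proof -
  assume c: "c \<in> classes B act r"
  then obtain x where x: "x \<in> B (sum_list r)" "c = orb act r x" by (auto simp: classes_def)
  have cs: "c \<subseteq> Mn (sum_list r)" using class_sub[OF c] B_sub by blast
  have "act (sum_list r) \<sigma> (osum c) = osum c" if s: "\<sigma> \<in> SigmaC r" for \<sigma>
  proof -
    have p: "\<sigma> permutes {..<sum_list r}" using SigmaC_perm[OF s] .
    have "act (sum_list r) \<sigma> (osum c) = (\<Sum>y\<in>c. act (sum_list r) \<sigma> y)"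
      unfolding osum_def using act_sum[OF p, of c "\<lambda>y. y"] cs by blast
    also have "\<dots> = sum (\<lambda>y. y) (act (sum_list r) \<sigma> ` c)"
      by (rule sum.reindex[symmetric, unfolded comp_def]) (rule inj_on_subset[OF act_inj[OF p] cs])
    also have "act (sum_list r) \<sigma> ` c = c" using orb_image[OF B_Mn[OF x(1)] s] x(2) by simp
    finally show ?thesis by (simp add: osum_def)
  qed
  then show ?thesis using osum_Mn[OF c] by (simp add: invs_def)
qed

end


context SM begin

abbreviation Sr :: "nat list \<Rightarrow> 'v set" where "Sr r \<equiv> osum ` classes B act r"

lemma Mn_span: "v \<in> Mn n \<Longrightarrow> v \<in> M.span (B n)" using B_span by simp

lemma rep_osum:
  assumes c: "c \<in> classes B act r"
  shows "M.representation (B (sum_list r)) (osum c) = (\<lambda>b. if b \<in> c then 1 else 0)"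
proof (rule M.representation_eqI[OF B_indep Mn_span[OF osum_Mn[OF c]]])
  have e: "{b. (if b \<in> c then 1 else (0::'f)) \<noteq> 0} = c" by auto
  show "(if b \<in> c then 1 else 0) \<noteq> 0 \<Longrightarrow> b \<in> B (sum_list r)" for b
    using class_sub[OF c] by (auto split: if_splits)
  show "finite {b. (if b \<in> c then 1 else (0::'f)) \<noteq> 0}" unfolding e using class_finite[OF c] .
  show "(\<Sum>b | (if b \<in> c then 1 else (0::'f)) \<noteq> 0. sM (if b \<in> c then 1 else 0) b) = osum c"
    unfolding e osum_def by (rule sum.cong) auto
qed

lemma osum_inj: "inj_on osum (classes B act r)"
proof (rule inj_onI)
  fix c c' assume c: "c \<in> classes B act r" and c': "c' \<in> classes B act r" and e: "osum c = osum c'"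
  have "(\<lambda>b. if b \<in> c then 1 else (0::'f)) = (\<lambda>b. if b \<in> c' then 1 else 0)"
    using rep_osum[OF c] rep_osum[OF c'] e by simp
  then show "c = c'" by (auto simp: fun_eq_iff split: if_splits)
qed

lemma classes_disj: "c \<in> classes B act r \<Longrightarrow> c' \<in> classes B act r \<Longrightarrow> b \<in> c \<Longrightarrow> b \<in> c' \<Longrightarrow> c = c'"
  using class_orb by metis

lemma S_indep: "M.independent (Sr r)"
  unfolding M.independent_explicit_module
proof (intro allI impI)
  fix t u v assume t: "finite t" "t \<subseteq> Sr r" and z: "(\<Sum>v\<in>t. sM (u v) v) = 0" and v: "v \<in> t"
  let ?n = "sum_list r"
  let ?R = "M.representation (B ?n)"
  obtain c0 where c0: "c0 \<in> classes B act r" "v = osum c0" using v t by blast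
  obtain b0 where b0: "b0 \<in> c0" using class_ne[OF c0(1)] by blast
  have tsp: "w \<in> M.span (B ?n)" if "w \<in> t" for w using t that osum_Mn Mn_span by blast
  have "?R (\<Sum>v\<in>t. sM (u v) v) b0 = (\<Sum>w\<in>t. u w * ?R w b0)"
    using M.representation_sum[OF B_indep, of t "\<lambda>w. sM (u w) w"] tsp
      M.representation_scale[OF B_indep] M.span_scale by simp
  also have "\<dots> = (\<Sum>w\<in>t. if w = v then u w else 0)"
  proof (rule sum.cong[OF refl])
    fix w assume w: "w \<in> t"
    then obtain c where c: "c \<in> classes B act r" "w = osum c" using t by blast
    have "?R w b0 = (if b0 \<in> c then 1 else 0)" using rep_osum[OF c(1)] c(2) by simp
    moreover have "b0 \<in> c \<longleftrightarrow> w = v"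
      using classes_disj[OF c(1) c0(1) _ b0] c c0 b0 inj_onD[OF osum_inj _ c(1) c0(1)] by auto
    ultimately show "u w * ?R w b0 = (if w = v then u w else 0)" by simp
  qed
  also have "\<dots> = u v" using v t by (simp add: sum.delta')
  finally show "u v = 0" using z M.representation_zero by simp
qed

lemma invs_span: "invs Mn act r = M.span (Sr r)"
proof
  show "M.span (Sr r) \<subseteq> invs Mn act r"
    using M.span_minimal[OF _ invs_subspace] osum_invs by blast
  show "invs Mn act r \<subseteq> M.span (Sr r)"
  proof
    fix x assume x: "x \<in> invs Mn act r"
    let ?n = "sum_list r"
    let ?R = "M.representation (B ?n) x"
    have xM: "x \<in> Mn ?n" and xinv: "\<And>\<sigma>. \<sigma> \<in> SigmaC r \<Longrightarrow> act ?n \<sigma> x = x"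
      using x by (auto simp: invs_def)
    have xs: "x \<in> M.span (B ?n)" using Mn_span[OF xM] .
    have Rinv: "?R b = ?R (act ?n (inv \<sigma>) b)" if s: "\<sigma> \<in> SigmaC r" and b: "b \<in> B ?n" for \<sigma> b
    proof -
      have p: "\<sigma> permutes {..<?n}" using SigmaC_perm[OF s] .
      have ip: "inv \<sigma> permutes {..<?n}" using permutes_inv[OF p] .
      define f where "f b' = (if b' \<in> B ?n then ?R (act ?n (inv \<sigma>) b') else 0)" for b'
      have supp: "{b'. f b' \<noteq> 0} = act ?n \<sigma> ` {b. ?R b \<noteq> 0}"
      proof (rule set_eqI, rule iffI)
        fix b' assume "b' \<in> {b'. f b' \<noteq> 0}"
        then have b': "b' \<in> B ?n" "?R (act ?n (inv \<sigma>) b') \<noteq> 0" by (auto simp: f_def split: if_splits)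
        then show "b' \<in> act ?n \<sigma> ` {b. ?R b \<noteq> 0}"
          using act_inv2[OF p B_Mn[OF b'(1)]] by (metis (mono_tags, lifting) image_eqI mem_Collect_eq)
      next
        fix b' assume "b' \<in> act ?n \<sigma> ` {b. ?R b \<noteq> 0}"
        then obtain b where b: "?R b \<noteq> 0" "b' = act ?n \<sigma> b" by blast
        have bB: "b \<in> B ?n" using M.representation_ne_zero[OF b(1)] .
        then show "b' \<in> {b'. f b' \<noteq> 0}"
          using b act_B[OF p bB] act_inv1[OF p B_Mn[OF bB]] by (simp add: f_def)
      qed
      have fin: "finite {b. ?R b \<noteq> 0}" using M.finite_representation .
      have injR: "inj_on (act ?n \<sigma>) {b. ?R b \<noteq> 0}"
        by (rule inj_on_subset[OF act_inj[OF p]]) (use M.representation_ne_zero B_Mn in blast)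
      have "M.representation (B ?n) (act ?n \<sigma> x) = f"
      proof (rule M.representation_eqI[OF B_indep Mn_span[OF act_Mn[OF p xM]]])
        show "f b \<noteq> 0 \<Longrightarrow> b \<in> B ?n" for b by (simp add: f_def split: if_splits)
        show "finite {b. f b \<noteq> 0}" unfolding supp using fin by simp
        have "(\<Sum>b | f b \<noteq> 0. sM (f b) b) = (\<Sum>b | ?R b \<noteq> 0. sM (f (act ?n \<sigma> b)) (act ?n \<sigma> b))"
          unfolding supp by (rule sum.reindex[OF injR, unfolded comp_def])
        also have "\<dots> = (\<Sum>b | ?R b \<noteq> 0. act ?n \<sigma> (sM (?R b) b))"
        proof (rule sum.cong[OF refl])
          fix b assume "b \<in> {b. ?R b \<noteq> 0}"
          then have bB: "b \<in> B ?n" using M.representation_ne_zero by blast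
          show "sM (f (act ?n \<sigma> b)) (act ?n \<sigma> b) = act ?n \<sigma> (sM (?R b) b)"
            using act_B[OF p bB] act_inv1[OF p B_Mn[OF bB]] act_scale[OF p B_Mn[OF bB]]
            by (simp add: f_def)
        qed
        also have "\<dots> = act ?n \<sigma> (\<Sum>b | ?R b \<noteq> 0. sM (?R b) b)"
          by (rule act_sum[OF p, symmetric]) (use M.representation_ne_zero B_Mn Mn_scale in blast)
        also have "\<dots> = act ?n \<sigma> x" using M.sum_nonzero_representation_eq[OF B_indep xs] by simp
        finally show "(\<Sum>b | f b \<noteq> 0. sM (f b) b) = act ?n \<sigma> x" .
      qed
      then have "?R = f" using xinv[OF s] by simp
      then show ?thesis using b by (simp add: f_def)
    qed
    have Rconst: "?R (act ?n \<tau> b) = ?R b" if s: "\<tau> \<in> SigmaC r" and b: "b \<in> B ?n" for \<tau> b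
    proof -
      have "?R b = ?R (act ?n (inv (inv \<tau>)) b)" using Rinv[OF SigmaC_inv[OF s] b] .
      then show ?thesis using permutes_inv_inv[OF SigmaC_perm[OF s]] by simp
    qed
    have Rorb: "?R b = ?R b0" if b0: "b0 \<in> B ?n" and b: "b \<in> orb act r b0" for b b0
      using b Rconst[OF _ b0] by (auto simp: orb_def)
    define supp where "supp = {b. ?R b \<noteq> 0}"
    have supp_fin: "finite supp" using M.finite_representation by (simp add: supp_def)
    have supp_B: "supp \<subseteq> B ?n" using M.representation_ne_zero by (auto simp: supp_def)
    define C where "C = orb act r ` supp"
    have C_cl: "C \<subseteq> classes B act r" using supp_B by (auto simp: C_def classes_def)
    have C_fin: "finite C" using supp_fin by (simp add: C_def)
    have U_fin: "finite (\<Union>C)" using C_fin C_cl class_finite by blast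
    have supp_U: "supp \<subseteq> \<Union>C"
    proof
      fix b assume "b \<in> supp"
      then have "b \<in> orb act r b" "orb act r b \<in> C" using orb_self supp_B B_Mn by (auto simp: C_def)
      then show "b \<in> \<Union>C" by blast
    qed
    have "x = (\<Sum>b\<in>supp. sM (?R b) b)"
      using M.sum_nonzero_representation_eq[OF B_indep xs] by (simp add: supp_def)
    also have "\<dots> = (\<Sum>b\<in>\<Union>C. sM (?R b) b)"
      by (rule sum.mono_neutral_left[OF U_fin supp_U]) (auto simp: supp_def)
    also have "\<dots> = (\<Sum>c\<in>C. \<Sum>b\<in>c. sM (?R b) b)"
      by (rule sum.Union_disjoint[unfolded comp_def])
        (use C_cl class_finite classes_disj in blast)+
    also have "\<dots> \<in> M.span (Sr r)"
    proof (rule M.span_sum)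
      fix c assume c: "c \<in> C"
      then obtain b0 where b0: "b0 \<in> supp" "c = orb act r b0" by (auto simp: C_def)
      have b0B: "b0 \<in> B ?n" using b0 supp_B by blast
      have "(\<Sum>b\<in>c. sM (?R b) b) = (\<Sum>b\<in>c. sM (?R b0) b)"
        using Rorb[OF b0B] b0(2) by (intro sum.cong) auto
      also have "\<dots> = sM (?R b0) (osum c)" by (simp add: osum_def M.scale_sum_right)
      finally show "(\<Sum>b\<in>c. sM (?R b) b) \<in> M.span (Sr r)"
        using c C_cl M.span_scale M.span_base by (metis image_eqI subsetD)
    qed
    finally show "x \<in> M.span (Sr r)" .
  qed
qed

end


lemma lmult_inj: "g permutes S \<Longrightarrow> inj_on ((\<circ>) g) A"
proof (rule inj_onI)
  fix a b assume p: "g permutes S" and e: "g \<circ> a = g \<circ> b"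
  have "inv g \<circ> (g \<circ> a) = inv g \<circ> (g \<circ> b)" using e by simp
  then show "a = b" by (simp add: o_assoc permutes_inv_o(2)[OF p])
qed

lemma lmult_SigmaC: "g \<in> SigmaC s \<Longrightarrow> (\<circ>) g ` SigmaC s = SigmaC s"
proof
  assume g: "g \<in> SigmaC s"
  show "(\<circ>) g ` SigmaC s \<subseteq> SigmaC s" using SigmaC_comp[OF g] by blast
  show "SigmaC s \<subseteq> (\<circ>) g ` SigmaC s"
  proof
    fix k assume k: "k \<in> SigmaC s"
    have "k = g \<circ> (inv g \<circ> k)"
      by (simp add: o_assoc permutes_inv_o(1)[OF SigmaC_perm[OF g]])
    then show "k \<in> (\<circ>) g ` SigmaC s" using SigmaC_comp[OF SigmaC_inv[OF g] k] by blast
  qed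
qed

lemma coset_rep:
  assumes HG: "SigmaC r \<subseteq> SigmaC r'" and C: "C \<in> lcosets (SigmaC r') (SigmaC r)" and g: "g \<in> C"
  shows "C = (\<circ>) g ` SigmaC r" "g \<in> SigmaC r'"
proof -
  obtain g0 where g0: "g0 \<in> SigmaC r'" "C = (\<circ>) g0 ` SigmaC r" using C by (auto simp: lcosets_def)
  then obtain h0 where h0: "h0 \<in> SigmaC r" "g = g0 \<circ> h0" using g by blast
  have "(\<circ>) g ` SigmaC r = (\<circ>) g0 ` ((\<circ>) h0 ` SigmaC r)" by (simp add: h0(2) image_image o_assoc)
  also have "\<dots> = C" using lmult_SigmaC[OF h0(1)] g0 by simp
  finally show "C = (\<circ>) g ` SigmaC r" by simp
  show "g \<in> SigmaC r'" using SigmaC_comp[OF g0(1)] h0 HG by blast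
qed

lemma coset_some:
  assumes C: "C \<in> lcosets (SigmaC r') (SigmaC r)"
  shows "(SOME \<sigma>. \<sigma> \<in> C) \<in> C"
proof -
  obtain g0 where "C = (\<circ>) g0 ` SigmaC r" using C by (auto simp: lcosets_def)
  then have "g0 \<circ> id \<in> C" using SigmaC_id by blast
  then show ?thesis by (rule someI[where P="\<lambda>\<sigma>. \<sigma> \<in> C"])
qed

lemma coset_sub: "SigmaC r \<subseteq> SigmaC r' \<Longrightarrow> C \<in> lcosets (SigmaC r') (SigmaC r) \<Longrightarrow> C \<subseteq> SigmaC r'"
  using coset_rep(2) by blast

lemma lcosets_finite: "finite (lcosets (SigmaC r') (SigmaC r))"
  by (simp add: lcosets_def SigmaC_finite)

context SM begin

lemma sum_const_scale: "(\<Sum>a\<in>A. v) = sM (of_nat (card A)) v"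
proof (induction A rule: infinite_finite_induct)
  case (insert x F)
  then show ?case by (simp add: M.scale_left_distrib add.commute)
qed simp_all

lemma stab_coset:
  assumes g: "g permutes {..<n}" and K: "\<And>k. k \<in> K \<Longrightarrow> k permutes {..<n}" and x: "x \<in> Mn n"
  shows "{k' \<in> (\<circ>) g ` K. act n k' x = act n g x} = (\<circ>) g ` {k \<in> K. act n k x = x}"
proof -
  have "act n (g \<circ> k) x = act n g x \<longleftrightarrow> act n k x = x" if k: "k \<in> K" for k
  proof -
    have "act n (g \<circ> k) x = act n g (act n k x)" using act_comp[OF g K[OF k] x] .
    moreover have "act n g (act n k x) = act n g x \<longleftrightarrow> act n k x = x"
    proof
      assume "act n g (act n k x) = act n g x"
      then show "act n k x = x" by (rule inj_onD[OF act_inj[OF g] _ act_Mn[OF K[OF k] x] x])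
    qed simp
    ultimately show ?thesis by simp
  qed
  then show ?thesis by blast
qed

lemma coset_sum:
  assumes HG: "SigmaC r \<subseteq> SigmaC r'" and ss: "sum_list r' = sum_list r" and x: "x \<in> B (sum_list r)"
  shows "(\<Sum>C\<in>lcosets (SigmaC r') (SigmaC r). act (sum_list r) (SOME \<sigma>. \<sigma> \<in> C) (osum (orb act r x)))
     = sM (of_nat (card (stab act r' x) div card (stab act r x))) (osum (orb act r' x))"
proof -
  define n where "n = sum_list r"
  define G where "G = SigmaC r'"
  define H where "H = SigmaC r"
  define L where "L = lcosets G H"
  define sg where "sg C = (SOME \<sigma>. \<sigma> \<in> C)" for C :: "(nat \<Rightarrow> nat) set"
  define oH where "oH = orb act r x"
  define oG where "oG = orb act r' x"
  define SH where "SH = stab act r x"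
  define SG where "SG = stab act r' x"
  have xM: "x \<in> Mn n" using B_Mn x by (simp add: n_def)
  have Gp: "\<And>g. g \<in> G \<Longrightarrow> g permutes {..<n}" unfolding G_def n_def using SigmaC_perm ss by metis
  have Hp: "\<And>g. g \<in> H \<Longrightarrow> g permutes {..<n}" using SigmaC_perm by (simp add: H_def n_def)
  have HG': "H \<subseteq> G" using HG by (simp add: G_def H_def)
  have oH_def': "oH = (\<lambda>h. act n h x) ` H" by (simp add: oH_def orb_def H_def n_def)
  have oG_def': "oG = (\<lambda>h. act n h x) ` G" by (simp add: oG_def orb_def G_def n_def ss)
  have SH_def': "SH = {h \<in> H. act n h x = x}" by (simp add: SH_def stab_def H_def n_def)
  have SG_def': "SG = {h \<in> G. act n h x = x}" by (simp add: SG_def stab_def G_def n_def ss)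
  have sgC: "\<And>C. C \<in> L \<Longrightarrow> sg C \<in> C" using coset_some by (simp add: sg_def L_def G_def H_def)
  have crep: "\<And>C g. C \<in> L \<Longrightarrow> g \<in> C \<Longrightarrow> C = (\<circ>) g ` H \<and> g \<in> G"
    using coset_rep[OF HG] by (simp add: L_def G_def H_def)
  have Lfin: "finite L" using lcosets_finite by (simp add: L_def G_def H_def)
  have oHfin: "finite oH" by (simp add: oH_def orb_finite)
  have oHM: "oH \<subseteq> Mn n" using act_Mn[OF Hp xM] by (auto simp: oH_def')
  have SGfin: "finite SG" using SigmaC_finite by (simp add: SG_def' G_def)
  have SHfin: "finite SH" using SigmaC_finite by (simp add: SH_def' H_def)
  have SHpos: "card SH > 0" using SHfin SigmaC_id act_id[OF xM] by (auto simp: SH_def' H_def card_gt_0_iff)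
  define f where "f p = act n (sg (fst p)) (snd p)" for p
  define P where "P = L \<times> oH"
  define F where "F z = {p \<in> P. f p = z}" for z
  have cardF: "card SG = card SH * card (F z)" if z: "z \<in> oG" for z
  proof -
    obtain g1 where g1: "g1 \<in> G" "z = act n g1 x" using z by (auto simp: oG_def')
    define T where "T = {g \<in> G. act n g x = z}"
    have "T = {g \<in> (\<circ>) g1 ` G. act n g x = act n g1 x}"
      using lmult_SigmaC[of g1 r'] g1 by (simp add: T_def G_def)
    also have "\<dots> = (\<circ>) g1 ` SG" unfolding SG_def' by (rule stab_coset[OF Gp[OF g1(1)] Gp xM])
    finally have T1: "T = (\<circ>) g1 ` SG" .
    have cT: "card T = card SG" unfolding T1 by (rule card_image[OF lmult_inj[OF Gp[OF g1(1)]]])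
    have TC: "card (T \<inter> C) = (if T \<inter> C = {} then 0 else card SH)" if C: "C \<in> L" for C
    proof (cases "T \<inter> C = {}")
      case False
      then obtain g where g: "g \<in> T" "g \<in> C" by blast
      have Cg: "C = (\<circ>) g ` H" "g \<in> G" using crep[OF C g(2)] by auto
      have zg: "z = act n g x" using g(1) by (simp add: T_def)
      have "T \<inter> C = {k' \<in> (\<circ>) g ` H. act n k' x = act n g x}"
        using Cg crep[OF C] HG' SigmaC_comp zg unfolding T_def
        by (auto simp: G_def H_def intro: SigmaC_comp)
      also have "\<dots> = (\<circ>) g ` SH" unfolding SH_def' by (rule stab_coset[OF Gp[OF Cg(2)] Hp xM])
      finally show ?thesis using False card_image[OF lmult_inj[OF Gp[OF Cg(2)]], of SH] by simp
    qed simp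
    have Tfin: "finite T" using T1 SGfin by simp
    have "T = (\<Union>C\<in>L. T \<inter> C)"
    proof
      show "T \<subseteq> (\<Union>C\<in>L. T \<inter> C)"
      proof
        fix g assume g: "g \<in> T"
        then have "g \<in> G" by (simp add: T_def)
        then have "(\<circ>) g ` H \<in> L" "g \<in> (\<circ>) g ` H"
          using SigmaC_id[of r] by (auto simp: L_def lcosets_def H_def intro!: image_eqI[of g _ id])
        then show "g \<in> (\<Union>C\<in>L. T \<inter> C)" using g by blast
      qed
    qed blast
    then have "card T = (\<Sum>C\<in>L. card (T \<inter> C))"
      using card_UN_disjoint[OF Lfin, of "\<lambda>C. T \<inter> C"] Tfin crep by (metis (no_types, lifting) Int_iff finite_Int disjoint_iff)
    also have "\<dots> = (\<Sum>C\<in>L. if T \<inter> C \<noteq> {} then card SH else 0)" using TC by (auto intro: sum.cong)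
    also have "\<dots> = (\<Sum>C\<in>{C\<in>L. T \<inter> C \<noteq> {}}. card SH)" by (rule sum.inter_filter[OF Lfin, symmetric])
    also have "\<dots> = card SH * card {C\<in>L. T \<inter> C \<noteq> {}}" by simp
    finally have cT2: "card T = card SH * card {C\<in>L. T \<inter> C \<noteq> {}}" .
    have "card (F z) = card {C\<in>L. T \<inter> C \<noteq> {}}"
    proof (rule bij_betw_same_card[of fst])
      show "bij_betw fst (F z) {C \<in> L. T \<inter> C \<noteq> {}}"
        unfolding bij_betw_def
      proof
        show "inj_on fst (F z)"
        proof (rule inj_onI)
          fix p p' assume p: "p \<in> F z" and p': "p' \<in> F z" and e: "fst p = fst p'"
          obtain C y where py: "p = (C, y)" by (cases p)
          obtain y' where py': "p' = (C, y')" using e py by (cases p') auto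
          have C: "C \<in> L" and y: "y \<in> oH" and y': "y' \<in> oH" using p p' py py' by (auto simp: F_def P_def)
          have "act n (sg C) y = act n (sg C) y'" using p p' py py' by (simp add: F_def f_def)
          then have "y = y'"
            using inj_onD[OF act_inj[OF Gp[OF conjunct2[OF crep[OF C sgC[OF C]]]]]] y y' oHM by blast
          then show "p = p'" using py py' by simp
        qed
        show "fst ` F z = {C \<in> L. T \<inter> C \<noteq> {}}"
        proof
          show "fst ` F z \<subseteq> {C \<in> L. T \<inter> C \<noteq> {}}"
          proof
            fix C assume "C \<in> fst ` F z"
            then obtain y where Cy: "(C, y) \<in> F z" by force
            then have C: "C \<in> L" and y: "y \<in> oH" and fz: "act n (sg C) y = z"
              by (auto simp: F_def P_def f_def)
            obtain h where h: "h \<in> H" "y = act n h x" using y by (auto simp: oH_def')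
            have cr: "C = (\<circ>) (sg C) ` H" "sg C \<in> G" using crep[OF C sgC[OF C]] by auto
            have "sg C \<circ> h \<in> C" using cr h by blast
            moreover have "sg C \<circ> h \<in> G" using SigmaC_comp cr(2) h(1) HG' by (auto simp: G_def)
            moreover have "act n (sg C \<circ> h) x = z" using act_comp[OF Gp[OF cr(2)] Hp[OF h(1)] xM] h fz by simp
            ultimately show "C \<in> {C \<in> L. T \<inter> C \<noteq> {}}" using C by (auto simp: T_def)
          qed
          show "{C \<in> L. T \<inter> C \<noteq> {}} \<subseteq> fst ` F z"
          proof
            fix C assume "C \<in> {C \<in> L. T \<inter> C \<noteq> {}}"
            then obtain g where C: "C \<in> L" and g: "g \<in> T" "g \<in> C" by blast
            have cr: "C = (\<circ>) (sg C) ` H" "sg C \<in> G" using crep[OF C sgC[OF C]] by auto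
            then obtain h where h: "h \<in> H" "g = sg C \<circ> h" using g by blast
            have "act n (sg C) (act n h x) = z"
              using act_comp[OF Gp[OF cr(2)] Hp[OF h(1)] xM] h g by (simp add: T_def)
            moreover have "act n h x \<in> oH" using h by (simp add: oH_def')
            ultimately have "(C, act n h x) \<in> F z" using C by (simp add: F_def P_def f_def)
            then show "C \<in> fst ` F z" by force
          qed
        qed
      qed
    qed
    then show ?thesis using cT cT2 by simp
  qed
  have Fk: "card (F z) = card SG div card SH" if "z \<in> oG" for z
    using cardF[OF that] SHpos by simp
  have fP: "f ` P \<subseteq> oG"
  proof
    fix z assume "z \<in> f ` P"
    then obtain C y where C: "C \<in> L" and y: "y \<in> oH" and z: "z = act n (sg C) y"
      by (auto simp: P_def f_def)
    obtain h where h: "h \<in> H" "y = act n h x" using y by (auto simp: oH_def')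
    have cr: "sg C \<in> G" using crep[OF C sgC[OF C]] by auto
    have "z = act n (sg C \<circ> h) x" using act_comp[OF Gp[OF cr] Hp[OF h(1)] xM] h z by simp
    moreover have "sg C \<circ> h \<in> G" using SigmaC_comp cr h(1) HG' by (auto simp: G_def)
    ultimately show "z \<in> oG" by (simp add: oG_def')
  qed
  have oGP: "oG \<subseteq> f ` P"
  proof
    fix z assume z: "z \<in> oG"
    have "card SG > 0" using SGfin SigmaC_id act_id[OF xM] by (auto simp: SG_def' G_def card_gt_0_iff)
    then have "card (F z) > 0" using cardF[OF z] by simp
    then have "F z \<noteq> {}" by auto
    then show "z \<in> f ` P" by (auto simp: F_def)
  qed
  have fPe: "f ` P = oG" using fP oGP by blast
  have Pfin: "finite P" using Lfin oHfin by (simp add: P_def)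
  have "(\<Sum>C\<in>L. act n (sg C) (osum oH)) = (\<Sum>C\<in>L. \<Sum>y\<in>oH. act n (sg C) y)"
    unfolding osum_def
  proof (rule sum.cong[OF refl])
    fix C assume C: "C \<in> L"
    have sp: "sg C permutes {..<n}" using Gp crep[OF C sgC[OF C]] by blast
    show "act n (sg C) (\<Sum>y\<in>oH. y) = (\<Sum>y\<in>oH. act n (sg C) y)"
      by (rule act_sum[OF sp]) (use oHM in blast)
  qed
  also have "\<dots> = (\<Sum>p\<in>P. f p)" unfolding P_def f_def by (simp add: sum.cartesian_product split_beta)
  also have "\<dots> = (\<Sum>z\<in>f ` P. \<Sum>p\<in>F z. f p)" unfolding F_def by (rule sum.image_gen[OF Pfin])
  also have "\<dots> = (\<Sum>z\<in>oG. sM (of_nat (card SG div card SH)) z)"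
    unfolding fPe
  proof (rule sum.cong[OF refl])
    fix z assume z: "z \<in> oG"
    have "(\<Sum>p\<in>F z. f p) = (\<Sum>p\<in>F z. z)" by (simp add: F_def)
    also have "\<dots> = sM (of_nat (card (F z))) z" by (rule sum_const_scale)
    finally show "(\<Sum>p\<in>F z. f p) = sM (of_nat (card SG div card SH)) z" using Fk[OF z] by simp
  qed
  also have "\<dots> = sM (of_nat (card SG div card SH)) (osum oG)"
    by (simp add: osum_def M.scale_sum_right)
  finally show ?thesis
    by (simp add: L_def G_def H_def sg_def oH_def oG_def SG_def SH_def n_def)
qed

end


context SM begin

lemma act_comp3: "\<pi> permutes {..<n} \<Longrightarrow> \<sigma> permutes {..<n} \<Longrightarrow> \<tau> permutes {..<n} \<Longrightarrow> v \<in> Mn n \<Longrightarrow>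
   act n (\<pi> \<circ> \<sigma> \<circ> \<tau>) v = act n \<pi> (act n \<sigma> (act n \<tau> v))"
  by (simp add: act_comp permutes_compose act_Mn)

lemma orb_blockperm:
  assumes p: "\<rho> permutes {..<length r}" and x: "x \<in> Mn (sum_list r)"
  shows "act (sum_list r) (blockperm r \<rho>) ` orb act r x = orb act (cperm \<rho> r) (act (sum_list r) (blockperm r \<rho>) x)"
proof -
  let ?n = "sum_list r"
  let ?\<pi> = "blockperm r \<rho>"
  have pp: "?\<pi> permutes {..<?n}" using blockperm_permutes[OF p] .
  have ip: "inv ?\<pi> permutes {..<?n}" using permutes_inv[OF pp] .
  have sc: "sum_list (cperm \<rho> r) = ?n" using sum_cperm[OF p] .
  show ?thesis unfolding orb_def sc
  proof (rule set_eqI, rule iffI)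
    fix y assume "y \<in> act ?n ?\<pi> ` (\<lambda>\<sigma>. act ?n \<sigma> x) ` SigmaC r"
    then obtain \<sigma> where s: "\<sigma> \<in> SigmaC r" "y = act ?n ?\<pi> (act ?n \<sigma> x)" by blast
    have sp: "\<sigma> permutes {..<?n}" using SigmaC_perm[OF s(1)] .
    have eq: "act ?n (?\<pi> \<circ> \<sigma> \<circ> inv ?\<pi>) (act ?n ?\<pi> x) = y"
      using act_comp3[OF pp sp ip act_Mn[OF pp x]] act_inv1[OF pp x] s(2) by simp
    show "y \<in> (\<lambda>\<sigma>. act ?n \<sigma> (act ?n ?\<pi> x)) ` SigmaC (cperm \<rho> r)"
      by (rule image_eqI[where f="\<lambda>\<sigma>. act ?n \<sigma> (act ?n ?\<pi> x)", OF eq[symmetric] blockperm_conj[OF p s(1)]])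
  next
    fix y assume "y \<in> (\<lambda>\<sigma>. act ?n \<sigma> (act ?n ?\<pi> x)) ` SigmaC (cperm \<rho> r)"
    then obtain \<tau> where t: "\<tau> \<in> SigmaC (cperm \<rho> r)" "y = act ?n \<tau> (act ?n ?\<pi> x)" by blast
    have tp: "\<tau> permutes {..<?n}" using SigmaC_perm[OF t(1)] sc by simp
    have eq: "act ?n ?\<pi> (act ?n (inv ?\<pi> \<circ> \<tau> \<circ> ?\<pi>) x) = y"
      using act_comp3[OF ip tp pp x] act_inv2[OF pp act_Mn[OF tp act_Mn[OF pp x]]] t(2) by simp
    have m: "act ?n (inv ?\<pi> \<circ> \<tau> \<circ> ?\<pi>) x \<in> (\<lambda>\<sigma>. act ?n \<sigma> x) ` SigmaC r"
      by (rule imageI[OF blockperm_conj_inv[OF p t(1)]])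
    show "y \<in> act ?n ?\<pi> ` (\<lambda>\<sigma>. act ?n \<sigma> x) ` SigmaC r"
      by (rule image_eqI[where f="act ?n ?\<pi>", OF eq[symmetric] m])
  qed
qed

lemma osum_act:
  assumes p: "\<sigma> permutes {..<n}" and c: "c \<subseteq> Mn n"
  shows "act n \<sigma> (osum c) = osum (act n \<sigma> ` c)"
proof -
  have "act n \<sigma> (osum c) = (\<Sum>y\<in>c. act n \<sigma> y)" unfolding osum_def
    by (rule act_sum[OF p]) (use c in blast)
  also have "\<dots> = osum (act n \<sigma> ` c)" unfolding osum_def
    by (rule sum.reindex[symmetric, unfolded comp_def]) (rule inj_on_subset[OF act_inj[OF p] c])
  finally show ?thesis .
qed

lemma osum_blockperm:
  assumes p: "\<rho> permutes {..<length r}" and x: "x \<in> B (sum_list r)"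
  shows "act (sum_list r) (blockperm r \<rho>) (osum (orb act r x)) = osum (orb act (cperm \<rho> r) (act (sum_list r) (blockperm r \<rho>) x))"
proof -
  have c: "orb act r x \<subseteq> Mn (sum_list r)" using orb_sub[OF x] B_sub by blast
  show ?thesis by (simp add: osum_act[OF blockperm_permutes[OF p] c] orb_blockperm[OF p B_Mn[OF x]])
qed

lemma classes_blockperm:
  assumes p: "\<rho> permutes {..<length r}" and x: "x \<in> B (sum_list r)"
  shows "orb act (cperm \<rho> r) (act (sum_list r) (blockperm r \<rho>) x) \<in> classes B act (cperm \<rho> r)"
proof -
  have "act (sum_list r) (blockperm r \<rho>) x \<in> B (sum_list (cperm \<rho> r))"
    using act_B[OF blockperm_permutes[OF p] x] sum_cperm[OF p] by simp
  then show ?thesis unfolding classes_def by blast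
qed

lemma orb_refine_sub:
  assumes HG: "SigmaC r' \<subseteq> SigmaC r" and ss: "sum_list r' = sum_list r" and x: "x \<in> Mn (sum_list r)"
    and y: "y \<in> orb act r x"
  shows "orb act r' y \<subseteq> orb act r x"
proof -
  have "orb act r' y \<subseteq> orb act r y" unfolding orb_def ss using HG by (rule image_mono)
  then show ?thesis using orb_mem[OF x y] by simp
qed

lemma osum_split:
  assumes HG: "SigmaC r' \<subseteq> SigmaC r" and ss: "sum_list r' = sum_list r" and x: "x \<in> B (sum_list r)"
  shows "osum (orb act r x) = (\<Sum>c\<in>{orb act r' y |y. y \<in> orb act r x}. osum c)"
    and "{orb act r' y |y. y \<in> orb act r x} \<subseteq> classes B act r'"
proof -
  let ?C = "{orb act r' y |y. y \<in> orb act r x}"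
  have xM: "x \<in> Mn (sum_list r)" using B_Mn[OF x] .
  have oB: "orb act r x \<subseteq> B (sum_list r)" using orb_sub[OF x] .
  show Ccl: "?C \<subseteq> classes B act r'" using oB ss by (auto simp: classes_def)
  have U: "\<Union>?C = orb act r x"
  proof
    show "\<Union>?C \<subseteq> orb act r x" using orb_refine_sub[OF HG ss xM] by blast
    show "orb act r x \<subseteq> \<Union>?C"
    proof
      fix y assume y: "y \<in> orb act r x"
      have "y \<in> Mn (sum_list r')" using y oB B_Mn ss by auto
      then have "y \<in> orb act r' y" by (rule orb_self)
      then show "y \<in> \<Union>?C" using y by blast
    qed
  qed
  have "osum (orb act r x) = sum (\<lambda>y. y) (\<Union>?C)" by (simp add: U osum_def)
  also have "\<dots> = (\<Sum>c\<in>?C. \<Sum>y\<in>c. y)"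
  proof (rule sum.Union_disjoint[unfolded comp_def])
    show "\<forall>A\<in>?C. finite A"
    proof
      fix A assume "A \<in> ?C"
      then show "finite A" by (rule class_finite[OF subsetD[OF Ccl]])
    qed
    show "\<forall>A\<in>?C. \<forall>B\<in>?C. A \<noteq> B \<longrightarrow> A \<inter> B = {}"
    proof (intro ballI impI)
      fix A B' assume A: "A \<in> ?C" and B': "B' \<in> ?C" and ne: "A \<noteq> B'"
      show "A \<inter> B' = {}"
      proof (rule ccontr)
        assume "A \<inter> B' \<noteq> {}"
        then obtain b where b: "b \<in> A" "b \<in> B'" by blast
        have "A = B'" by (rule classes_disj[OF subsetD[OF Ccl A] subsetD[OF Ccl B'] b])
        then show False using ne by simp
      qed
    qed
  qed
  finally show "osum (orb act r x) = (\<Sum>c\<in>?C. osum c)" by (simp add: osum_def)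
qed

lemma invs_refine:
  assumes HG: "SigmaC r' \<subseteq> SigmaC r" and ss: "sum_list r' = sum_list r"
  shows "invs Mn act r \<subseteq> invs Mn act r'"
  using HG ss by (auto simp: invs_def)

lemma orb_0: "orb act (0 # r) x = orb act r x"
  by (simp add: orb_def SigmaC_0)

lemma classes_0: "classes B act (0 # r) = classes B act r"
  by (simp add: classes_def orb_0)

lemma invs_0: "invs Mn act (0 # r) = invs Mn act r"
  by (simp add: invs_def SigmaC_0)

end


lemma length_rep: "length (rep q as) = sum_list q"
proof -
  have "length (rep q as) = sum_list (map (\<lambda>j. q ! j) [0..<length q])"
    by (simp add: rep_def length_concat comp_def)
  also have "\<dots> = sum_list q" by (simp add: map_nth)
  finally show ?thesis .
qed

lemma P_M_eq: "c \<in> classes B act r \<Longrightarrow> length as = length r \<Longrightarrow> P_M B act \<beta> c r as = \<beta> (osum c) r as"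
  by (simp add: P_M_def osum_def)

context SM begin

context
  fixes sA :: "'f \<Rightarrow> 'a::ab_group_add \<Rightarrow> 'a" and \<beta>
  assumes vA: "vector_space sA" and isb: "is_beta sA sM Mn act \<beta>"
begin

interpretation A: vector_space sA by (rule vA)

lemma b1: "x \<in> invs Mn act r \<Longrightarrow> length as = length r \<Longrightarrow> \<rho> permutes {..<length r} \<Longrightarrow>
        \<beta> x r as = \<beta> (act (sum_list r) (blockperm r \<rho>) x) (cperm \<rho> r) (cperm \<rho> as)"
  using isb[unfolded is_beta_def, THEN conjunct2, THEN conjunct1] by blast

lemma b2: "x \<in> invs Mn act (0 # r) \<Longrightarrow> length as = length r \<Longrightarrow>
        \<beta> x (0 # r) (a0 # as) = \<beta> x r as"
  using isb[unfolded is_beta_def, THEN conjunct2, THEN conjunct2, THEN conjunct1] by blast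

lemma b3: "x \<in> invs Mn act r \<Longrightarrow> length (a # as) = length r \<Longrightarrow>
        \<beta> x r (sA c a # as) = sA (c ^ hd r) (\<beta> x r (a # as))"
  using isb[unfolded is_beta_def, THEN conjunct2, THEN conjunct2, THEN conjunct2, THEN conjunct1] by blast

lemma b4: "x \<in> invs Mn act r \<Longrightarrow> sum_list q = length r \<Longrightarrow> length as = length q \<Longrightarrow>
        \<beta> x r (rep q as) =
          \<beta> (\<Sum>C\<in>lcosets (SigmaC (coarsen q r)) (SigmaC r). act (sum_list r) (SOME \<sigma>. \<sigma> \<in> C) x)
            (coarsen q r) as"
  using isb[unfolded is_beta_def, THEN conjunct2, THEN conjunct2, THEN conjunct2, THEN conjunct2, THEN conjunct1] by blast

lemma b5: "x \<in> invs Mn act r \<Longrightarrow> length (a1 # as) = length r \<Longrightarrow>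
        \<beta> x r ((a0 + a1) # as) = (\<Sum>l\<in>{..hd r}. \<beta> x (l # (hd r - l) # tl r) (a0 # a1 # as))"
  using isb[unfolded is_beta_def, THEN conjunct2, THEN conjunct2, THEN conjunct2, THEN conjunct2, THEN conjunct2, THEN conjunct1] by blast

lemma b6: "x \<in> invs Mn act r \<Longrightarrow> y \<in> invs Mn act r \<Longrightarrow> length as = length r \<Longrightarrow>
        \<beta> (sM c x + y) r as = sA c (\<beta> x r as) + \<beta> y r as"
  using isb[unfolded is_beta_def, THEN conjunct2, THEN conjunct2, THEN conjunct2, THEN conjunct2, THEN conjunct2, THEN conjunct2] by blast

lemma invs_0': "0 \<in> invs Mn act r" using M.subspace_0[OF invs_subspace] .

lemma b_zero: "length as = length r \<Longrightarrow> \<beta> 0 r as = 0"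
  using b6[OF invs_0' invs_0', where as=as and c=1] by simp

lemma b_add: "x \<in> invs Mn act r \<Longrightarrow> y \<in> invs Mn act r \<Longrightarrow> length as = length r \<Longrightarrow>
        \<beta> (x + y) r as = \<beta> x r as + \<beta> y r as"
  using b6[where x=x and y=y and as=as and c=1] by simp

lemma b_scale: "x \<in> invs Mn act r \<Longrightarrow> length as = length r \<Longrightarrow>
        \<beta> (sM c x) r as = sA c (\<beta> x r as)"
  using b6[OF _ invs_0', where x=x and as=as and c=c] b_zero by simp

lemma b_sum: "(\<And>i. i \<in> I \<Longrightarrow> f i \<in> invs Mn act r) \<Longrightarrow> length as = length r \<Longrightarrow>
        \<beta> (sum f I) r as = (\<Sum>i\<in>I. \<beta> (f i) r as)"
proof (induction I rule: infinite_finite_induct)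
  case (infinite A) then show ?case by (simp add: b_zero)
next
  case empty then show ?case by (simp add: b_zero)
next
  case (insert x F)
  have "sum f F \<in> invs Mn act r" using M.subspace_sum[OF invs_subspace] insert.prems by blast
  then show ?case using insert by (simp add: b_add)
qed

lemma part1: "is_gamma sA B act (P_M B act \<beta>)"
  unfolding is_gamma_def
proof (intro conjI allI impI)
  fix c r and as :: "'a list"
  assume "\<not> (c \<in> classes B act r \<and> length as = length r)"
  then show "P_M B act \<beta> c r as = undefined" unfolding P_M_def by auto
next
  fix r x \<rho> and as :: "'a list"
  assume a: "x \<in> B (sum_list r) \<and> length as = length r \<and> \<rho> permutes {..<length r}"
  then have x: "x \<in> B (sum_list r)" and l: "length as = length r" and p: "\<rho> permutes {..<length r}" by auto
  have c: "orb act r x \<in> classes B act r" using x by (auto simp: classes_def)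
  have "P_M B act \<beta> (orb act r x) r as = \<beta> (osum (orb act r x)) r as" by (rule P_M_eq[OF c l])
  also have "\<dots> = \<beta> (act (sum_list r) (blockperm r \<rho>) (osum (orb act r x))) (cperm \<rho> r) (cperm \<rho> as)"
    by (rule b1[OF osum_invs[OF c] l p])
  also have "\<dots> = \<beta> (osum (orb act (cperm \<rho> r) (act (sum_list r) (blockperm r \<rho>) x))) (cperm \<rho> r) (cperm \<rho> as)"
    by (simp add: osum_blockperm[OF p x])
  also have "\<dots> = P_M B act \<beta> (orb act (cperm \<rho> r) (act (sum_list r) (blockperm r \<rho>) x)) (cperm \<rho> r) (cperm \<rho> as)"
    by (rule P_M_eq[symmetric, OF classes_blockperm[OF p x]]) (simp add: l)
  finally show "P_M B act \<beta> (orb act r x) r as =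
      P_M B act \<beta> (orb act (cperm \<rho> r) (act (sum_list r) (blockperm r \<rho>) x)) (cperm \<rho> r) (cperm \<rho> as)" .
next
  fix r x and a0 :: 'a and as :: "'a list"
  assume a: "x \<in> B (sum_list r) \<and> length as = length r"
  then have x: "x \<in> B (sum_list r)" and l: "length as = length r" by auto
  have c: "orb act r x \<in> classes B act r" using x by (auto simp: classes_def)
  have c0: "orb act (0 # r) x \<in> classes B act (0 # r)" using c by (simp add: orb_0 classes_0)
  have "P_M B act \<beta> (orb act (0 # r) x) (0 # r) (a0 # as) = \<beta> (osum (orb act r x)) (0 # r) (a0 # as)"
    using P_M_eq[OF c0, of "a0 # as" \<beta>] l by (simp add: orb_0)
  also have "\<dots> = \<beta> (osum (orb act r x)) r as"
    by (rule b2) (use osum_invs[OF c] invs_0 l in auto)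
  also have "\<dots> = P_M B act \<beta> (orb act r x) r as" by (rule P_M_eq[symmetric, OF c l])
  finally show "P_M B act \<beta> (orb act (0 # r) x) (0 # r) (a0 # as) = P_M B act \<beta> (orb act r x) r as" .
next
  fix r x c and a :: 'a and as :: "'a list"
  assume a: "x \<in> B (sum_list r) \<and> length (a # as) = length r"
  then have x: "x \<in> B (sum_list r)" and l: "length (a # as) = length r" by auto
  have cl: "orb act r x \<in> classes B act r" using x by (auto simp: classes_def)
  have l2: "length (sA c a # as) = length r" using l by simp
  show "P_M B act \<beta> (orb act r x) r (sA c a # as) = sA (c ^ hd r) (P_M B act \<beta> (orb act r x) r (a # as))"
    using b3[OF osum_invs[OF cl] l] P_M_eq[OF cl l] P_M_eq[OF cl l2] by simp
next
  fix r x q and as :: "'a list"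
  assume a: "x \<in> B (sum_list r) \<and> sum_list q = length r \<and> length as = length q"
  then have x: "x \<in> B (sum_list r)" and sq: "sum_list q = length r" and l: "length as = length q" by auto
  let ?r' = "coarsen q r"
  have cl: "orb act r x \<in> classes B act r" using x by (auto simp: classes_def)
  have ss: "sum_list ?r' = sum_list r" using sum_coarsen[OF sq] .
  have cl': "orb act ?r' x \<in> classes B act ?r'" using x ss by (auto simp: classes_def)
  have lr: "length (rep q as) = length r" using sq by (simp add: length_rep)
  have l': "length as = length ?r'" using l by (simp add: length_coarsen)
  have "P_M B act \<beta> (orb act r x) r (rep q as) = \<beta> (osum (orb act r x)) r (rep q as)"
    by (rule P_M_eq[OF cl lr])
  also have "\<dots> = \<beta> (\<Sum>C\<in>lcosets (SigmaC ?r') (SigmaC r). act (sum_list r) (SOME \<sigma>. \<sigma> \<in> C) (osum (orb act r x))) ?r' as"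
    by (rule b4[OF osum_invs[OF cl] sq l])
  also have "\<dots> = \<beta> (sM (of_nat (card (stab act ?r' x) div card (stab act r x))) (osum (orb act ?r' x))) ?r' as"
    by (simp add: coset_sum[OF SigmaC_coarsen[OF sq] ss x])
  also have "\<dots> = sA (of_nat (card (stab act ?r' x) div card (stab act r x))) (\<beta> (osum (orb act ?r' x)) ?r' as)"
    by (rule b_scale[OF osum_invs[OF cl'] l'])
  also have "\<dots> = sA (of_nat (card (stab act ?r' x) div card (stab act r x))) (P_M B act \<beta> (orb act ?r' x) ?r' as)"
    by (simp add: P_M_eq[OF cl' l'])
  finally show "P_M B act \<beta> (orb act r x) r (rep q as) =
      sA (of_nat (card (stab act ?r' x) div card (stab act r x))) (P_M B act \<beta> (orb act ?r' x) ?r' as)" .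
next
  fix r x and a0 a1 :: 'a and as :: "'a list"
  assume a: "x \<in> B (sum_list r) \<and> length (a1 # as) = length r"
  then have x: "x \<in> B (sum_list r)" and l: "length (a1 # as) = length r" by auto
  have rne: "r \<noteq> []" using l by auto
  have cl: "orb act r x \<in> classes B act r" using x by (auto simp: classes_def)
  have l2: "length ((a0 + a1) # as) = length r" using l by simp
  have "P_M B act \<beta> (orb act r x) r ((a0 + a1) # as) = \<beta> (osum (orb act r x)) r ((a0 + a1) # as)"
    by (rule P_M_eq[OF cl l2])
  also have "\<dots> = (\<Sum>l\<in>{..hd r}. \<beta> (osum (orb act r x)) (l # (hd r - l) # tl r) (a0 # a1 # as))"
    by (rule b5[OF osum_invs[OF cl] l])
  also have "\<dots> = (\<Sum>l\<in>{..hd r}. \<Sum>c\<in>{orb act (l # (hd r - l) # tl r) y |y. y \<in> orb act r x}.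
              P_M B act \<beta> c (l # (hd r - l) # tl r) (a0 # a1 # as))"
  proof (rule sum.cong[OF refl])
    fix l assume "l \<in> {..hd r}"
    then have lh: "l \<le> hd r" by simp
    let ?r' = "l # (hd r - l) # tl r"
    let ?C = "{orb act ?r' y |y. y \<in> orb act r x}"
    have HG: "SigmaC ?r' \<subseteq> SigmaC r" using SigmaC_split[OF rne lh] .
    have ss: "sum_list ?r' = sum_list r" using sum_split[OF rne lh] .
    have l': "length (a0 # a1 # as) = length ?r'" using l rne by (cases r) auto
    have Ccl: "?C \<subseteq> classes B act ?r'" using osum_split(2)[OF HG ss x] .
    have "\<beta> (osum (orb act r x)) ?r' (a0 # a1 # as) = \<beta> (\<Sum>c\<in>?C. osum c) ?r' (a0 # a1 # as)"
      by (simp add: osum_split(1)[OF HG ss x])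
    also have "\<dots> = (\<Sum>c\<in>?C. \<beta> (osum c) ?r' (a0 # a1 # as))"
      by (rule b_sum[OF _ l']) (use Ccl osum_invs in blast)
    also have "\<dots> = (\<Sum>c\<in>?C. P_M B act \<beta> c ?r' (a0 # a1 # as))"
    proof (rule sum.cong[OF refl])
      fix c assume "c \<in> ?C"
      then have "c \<in> classes B act ?r'" using Ccl by blast
      then show "\<beta> (osum c) ?r' (a0 # a1 # as) = P_M B act \<beta> c ?r' (a0 # a1 # as)"
        by (rule P_M_eq[symmetric, OF _ l'])
    qed
    finally show "\<beta> (osum (orb act r x)) ?r' (a0 # a1 # as) = (\<Sum>c\<in>?C. P_M B act \<beta> c ?r' (a0 # a1 # as))" .
  qed
  finally show "P_M B act \<beta> (orb act r x) r ((a0 + a1) # as) =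
      (\<Sum>l\<in>{..hd r}. \<Sum>c\<in>{orb act (l # (hd r - l) # tl r) y |y. y \<in> orb act r x}.
              P_M B act \<beta> c (l # (hd r - l) # tl r) (a0 # a1 # as))" .
qed

end
end


context SM begin

lemma invs_zero: "0 \<in> invs Mn act r" using M.subspace_0[OF invs_subspace] .

lemma invs_induct[consumes 1, case_names zero step]:
  assumes x: "x \<in> invs Mn act r" and P0: "P 0"
    and step: "\<And>c u y. c \<in> classes B act r \<Longrightarrow> y \<in> invs Mn act r \<Longrightarrow> P y \<Longrightarrow> P (sM u (osum c) + y)"
  shows "P x"
proof -
  have "x \<in> M.span (Sr r)" using x invs_span by simp
  then have "x \<in> invs Mn act r \<and> P x"
  proof (induction rule: M.span_induct_alt)
    case base
    then show ?case using P0 M.subspace_0[OF invs_subspace] by simp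
  next
    case (step u v y)
    then obtain c where c: "c \<in> classes B act r" "v = osum c" by blast
    have "sM u v + y \<in> invs Mn act r"
      using step osum_invs[OF c(1)] c(2) M.subspace_add[OF invs_subspace] M.subspace_scale[OF invs_subspace] by metis
    moreover have "P (sM u (osum c) + y)" using assms(3)[OF c(1)] step by blast
    ultimately show ?case using c(2) by simp
  qed
  then show ?thesis by simp
qed

context
  fixes sA :: "'f \<Rightarrow> 'a::ab_group_add \<Rightarrow> 'a" and \<beta> :: "'v \<Rightarrow> nat list \<Rightarrow> 'a list \<Rightarrow> 'a"
  assumes vA: "vector_space sA"
    and H6: "\<And>r x y c as. x \<in> invs Mn act r \<Longrightarrow> y \<in> invs Mn act r \<Longrightarrow> length as = length r \<Longrightarrow>
        \<beta> (sM c x + y) r as = sA c (\<beta> x r as) + \<beta> y r as"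
begin

interpretation A: vector_space sA by (rule vA)

lemma l_zero: "length as = length r \<Longrightarrow> \<beta> 0 r as = 0"
  using H6[OF invs_zero invs_zero, where as=as and c=1] by simp

lemma l_add: "x \<in> invs Mn act r \<Longrightarrow> y \<in> invs Mn act r \<Longrightarrow> length as = length r \<Longrightarrow>
        \<beta> (x + y) r as = \<beta> x r as + \<beta> y r as"
  using H6[where x=x and y=y and as=as and c=1] by simp

lemma l_scale: "x \<in> invs Mn act r \<Longrightarrow> length as = length r \<Longrightarrow>
        \<beta> (sM c x) r as = sA c (\<beta> x r as)"
  using H6[OF _ invs_zero, where x=x and as=as and c=c] l_zero by simp

lemma l_sum: "(\<And>i. i \<in> I \<Longrightarrow> f i \<in> invs Mn act r) \<Longrightarrow> length as = length r \<Longrightarrow>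
        \<beta> (sum f I) r as = (\<Sum>i\<in>I. \<beta> (f i) r as)"
proof (induction I rule: infinite_finite_induct)
  case (infinite A) then show ?case by (simp add: l_zero)
next
  case empty then show ?case by (simp add: l_zero)
next
  case (insert x F)
  have "sum f F \<in> invs Mn act r" using M.subspace_sum[OF invs_subspace] insert.prems by blast
  then show ?case using insert by (simp add: l_add)
qed

end

definition bg :: "('f \<Rightarrow> 'a::ab_group_add \<Rightarrow> 'a) \<Rightarrow> ('v set \<Rightarrow> nat list \<Rightarrow> 'a list \<Rightarrow> 'a) \<Rightarrow> 'v \<Rightarrow> nat list \<Rightarrow> 'a list \<Rightarrow> 'a" where
  "bg sA \<gamma> x r as = (if x \<in> invs Mn act r \<and> length as = length r
     then vector_space_pair.construct sM sA (Sr r) (\<lambda>v. \<gamma> (the_inv_into (classes B act r) osum v) r as) x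
     else undefined)"

context
  fixes sA :: "'f \<Rightarrow> 'a::ab_group_add \<Rightarrow> 'a" and \<gamma> :: "'v set \<Rightarrow> nat list \<Rightarrow> 'a list \<Rightarrow> 'a"
  assumes vA: "vector_space sA"
begin

interpretation A: vector_space sA by (rule vA)
interpretation P: vector_space_pair sM sA by unfold_locales

lemma bg_lin: "x \<in> invs Mn act r \<Longrightarrow> y \<in> invs Mn act r \<Longrightarrow> length as = length r \<Longrightarrow>
        bg sA \<gamma> (sM c x + y) r as = sA c (bg sA \<gamma> x r as) + bg sA \<gamma> y r as"
proof -
  assume x: "x \<in> invs Mn act r" and y: "y \<in> invs Mn act r" and l: "length as = length r"
  have xy: "sM c x + y \<in> invs Mn act r"
    using M.subspace_add[OF invs_subspace] M.subspace_scale[OF invs_subspace] x y by blast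
  let ?g = "P.construct (Sr r) (\<lambda>v. \<gamma> (the_inv_into (classes B act r) osum v) r as)"
  have lin: "Vector_Spaces.linear sM sA ?g" by (rule P.linear_construct[OF S_indep])
  have "?g (sM c x + y) = sA c (?g x) + ?g y" using lin unfolding linear_iff by simp
  then show ?thesis using x y xy l by (simp add: bg_def)
qed

lemma bg_basis: "c \<in> classes B act r \<Longrightarrow> length as = length r \<Longrightarrow> bg sA \<gamma> (osum c) r as = \<gamma> c r as"
proof -
  assume c: "c \<in> classes B act r" and l: "length as = length r"
  have "P.construct (Sr r) (\<lambda>v. \<gamma> (the_inv_into (classes B act r) osum v) r as) (osum c)
      = \<gamma> (the_inv_into (classes B act r) osum (osum c)) r as"
    by (rule P.construct_basis[OF S_indep]) (use c in blast)
  also have "\<dots> = \<gamma> c r as" using the_inv_into_f_f[OF osum_inj c] by simp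
  finally show ?thesis using osum_invs[OF c] l by (simp add: bg_def)
qed

end
end


context SM begin

lemma invs_Mn: "x \<in> invs Mn act r \<Longrightarrow> x \<in> Mn (sum_list r)" by (simp add: invs_def)

lemma act_invs_blockperm:
  assumes p: "\<rho> permutes {..<length r}" and x: "x \<in> invs Mn act r"
  shows "act (sum_list r) (blockperm r \<rho>) x \<in> invs Mn act (cperm \<rho> r)"
  using x
proof (induction rule: invs_induct)
  case zero then show ?case using act_zero[OF blockperm_permutes[OF p]] invs_zero by simp
next
  case (step c u y)
  obtain x0 where x0: "x0 \<in> B (sum_list r)" "c = orb act r x0" using step(1) by (auto simp: classes_def)
  have pp: "blockperm r \<rho> permutes {..<sum_list r}" using blockperm_permutes[OF p] .
  have "act (sum_list r) (blockperm r \<rho>) (sM u (osum c) + y)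
       = sM u (act (sum_list r) (blockperm r \<rho>) (osum c)) + act (sum_list r) (blockperm r \<rho>) y"
    by (rule act_lin[OF pp osum_Mn[OF step(1)] invs_Mn[OF step(2)]])
  also have "act (sum_list r) (blockperm r \<rho>) (osum c) = osum (orb act (cperm \<rho> r) (act (sum_list r) (blockperm r \<rho>) x0))"
    using osum_blockperm[OF p x0(1)] x0(2) by simp
  finally show ?case
    using osum_invs[OF classes_blockperm[OF p x0(1)]] step(3)
      M.subspace_add[OF invs_subspace] M.subspace_scale[OF invs_subspace] by metis
qed

definition Tq :: "nat list \<Rightarrow> nat list \<Rightarrow> 'v \<Rightarrow> 'v" where
  "Tq q r x = (\<Sum>C\<in>lcosets (SigmaC (coarsen q r)) (SigmaC r). act (sum_list r) (SOME \<sigma>. \<sigma> \<in> C) x)"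

lemma Tq_perm:
  assumes sq: "sum_list q = length r" and C: "C \<in> lcosets (SigmaC (coarsen q r)) (SigmaC r)"
  shows "(SOME \<sigma>. \<sigma> \<in> C) permutes {..<sum_list r}"
proof -
  have "(SOME \<sigma>. \<sigma> \<in> C) \<in> SigmaC (coarsen q r)"
    using coset_sub[OF SigmaC_coarsen[OF sq] C] coset_some[OF C] by blast
  then show ?thesis using SigmaC_perm sum_coarsen[OF sq] by metis
qed

lemma Tq_lin:
  assumes sq: "sum_list q = length r" and x: "x \<in> Mn (sum_list r)" and y: "y \<in> Mn (sum_list r)"
  shows "Tq q r (sM u x + y) = sM u (Tq q r x) + Tq q r y"
  unfolding Tq_def M.scale_sum_right sum.distrib[symmetric]
  by (rule sum.cong[OF refl]) (rule act_lin[OF Tq_perm[OF sq] x y])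

lemma Tq_zero: "sum_list q = length r \<Longrightarrow> Tq q r 0 = 0"
  unfolding Tq_def by (simp add: act_zero Tq_perm)

context
  fixes sA :: "'f \<Rightarrow> 'a::ab_group_add \<Rightarrow> 'a" and \<gamma>
  assumes vA: "vector_space sA" and isg: "is_gamma sA B act \<gamma>"
begin

interpretation A: vector_space sA by (rule vA)

lemma g0: "\<not> (c \<in> classes B act r \<and> length as = length r) \<Longrightarrow> \<gamma> c r as = undefined"
  using isg[unfolded is_gamma_def, THEN conjunct1] by blast

lemma g1: "x \<in> B (sum_list r) \<Longrightarrow> length as = length r \<Longrightarrow> \<rho> permutes {..<length r} \<Longrightarrow>
        \<gamma> (orb act r x) r as =
          \<gamma> (orb act (cperm \<rho> r) (act (sum_list r) (blockperm r \<rho>) x)) (cperm \<rho> r) (cperm \<rho> as)"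
  using isg[unfolded is_gamma_def, THEN conjunct2, THEN conjunct1] by blast

lemma g2: "x \<in> B (sum_list r) \<Longrightarrow> length as = length r \<Longrightarrow>
        \<gamma> (orb act (0 # r) x) (0 # r) (a0 # as) = \<gamma> (orb act r x) r as"
  using isg[unfolded is_gamma_def, THEN conjunct2, THEN conjunct2, THEN conjunct1] by blast

lemma g3: "x \<in> B (sum_list r) \<Longrightarrow> length (a # as) = length r \<Longrightarrow>
        \<gamma> (orb act r x) r (sA c a # as) = sA (c ^ hd r) (\<gamma> (orb act r x) r (a # as))"
  using isg[unfolded is_gamma_def, THEN conjunct2, THEN conjunct2, THEN conjunct2, THEN conjunct1] by blast

lemma g4: "x \<in> B (sum_list r) \<Longrightarrow> sum_list q = length r \<Longrightarrow> length as = length q \<Longrightarrow>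
        \<gamma> (orb act r x) r (rep q as) =
          sA (of_nat (card (stab act (coarsen q r) x) div card (stab act r x)))
             (\<gamma> (orb act (coarsen q r) x) (coarsen q r) as)"
  using isg[unfolded is_gamma_def, THEN conjunct2, THEN conjunct2, THEN conjunct2, THEN conjunct2, THEN conjunct1] by blast

lemma g5: "x \<in> B (sum_list r) \<Longrightarrow> length (a1 # as) = length r \<Longrightarrow>
        \<gamma> (orb act r x) r ((a0 + a1) # as) =
          (\<Sum>l\<in>{..hd r}. \<Sum>c\<in>{orb act (l # (hd r - l) # tl r) y | y. y \<in> orb act r x}.
              \<gamma> c (l # (hd r - l) # tl r) (a0 # a1 # as))"
  using isg[unfolded is_gamma_def, THEN conjunct2, THEN conjunct2, THEN conjunct2, THEN conjunct2, THEN conjunct2] by blast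

abbreviation "bgg \<equiv> bg sA \<gamma>"

lemma bgg_lin: "x \<in> invs Mn act r \<Longrightarrow> y \<in> invs Mn act r \<Longrightarrow> length as = length r \<Longrightarrow>
        bgg (sM c x + y) r as = sA c (bgg x r as) + bgg y r as"
  by (rule bg_lin[OF vA])

lemma bgg_basis: "c \<in> classes B act r \<Longrightarrow> length as = length r \<Longrightarrow> bgg (osum c) r as = \<gamma> c r as"
  by (rule bg_basis[OF vA])

lemma bgg_zero: "length as = length r \<Longrightarrow> bgg 0 r as = 0"
  by (rule l_zero[OF vA bgg_lin])

lemma bgg_scale: "x \<in> invs Mn act r \<Longrightarrow> length as = length r \<Longrightarrow> bgg (sM c x) r as = sA c (bgg x r as)"
  by (rule l_scale[OF vA bgg_lin])

lemma bgg_sum: "(\<And>i. i \<in> I \<Longrightarrow> f i \<in> invs Mn act r) \<Longrightarrow> length as = length r \<Longrightarrow>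
        bgg (sum f I) r as = (\<Sum>i\<in>I. bgg (f i) r as)"
  by (rule l_sum[OF vA bgg_lin])

lemma bgg1:
  assumes x: "x \<in> invs Mn act r" and l: "length as = length r" and p: "\<rho> permutes {..<length r}"
  shows "bgg x r as = bgg (act (sum_list r) (blockperm r \<rho>) x) (cperm \<rho> r) (cperm \<rho> as)"
  using x
proof (induction rule: invs_induct)
  case zero
  have l': "length (cperm \<rho> as) = length (cperm \<rho> r)" using l by simp
  show ?case using bgg_zero[OF l] bgg_zero[OF l'] act_zero[OF blockperm_permutes[OF p]] by simp
next
  case (step c u y)
  let ?\<pi> = "blockperm r \<rho>"
  let ?n = "sum_list r"
  have l': "length (cperm \<rho> as) = length (cperm \<rho> r)" using l by simp
  obtain x0 where x0: "x0 \<in> B ?n" "c = orb act r x0" using step(1) by (auto simp: classes_def)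
  have pp: "?\<pi> permutes {..<?n}" using blockperm_permutes[OF p] .
  define c' where "c' = orb act (cperm \<rho> r) (act ?n ?\<pi> x0)"
  have c': "c' \<in> classes B act (cperm \<rho> r)" using classes_blockperm[OF p x0(1)] by (simp add: c'_def)
  have ac: "act ?n ?\<pi> (osum c) = osum c'" using osum_blockperm[OF p x0(1)] x0(2) by (simp add: c'_def)
  have ay: "act ?n ?\<pi> y \<in> invs Mn act (cperm \<rho> r)" by (rule act_invs_blockperm[OF p step(2)])
  have "bgg (sM u (osum c) + y) r as = sA u (\<gamma> c r as) + bgg y r as"
    using bgg_lin[OF osum_invs[OF step(1)] step(2) l] bgg_basis[OF step(1) l] by simp
  also have "\<gamma> c r as = \<gamma> c' (cperm \<rho> r) (cperm \<rho> as)" using g1[OF x0(1) l p] x0(2) by (simp add: c'_def)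
  also have "bgg y r as = bgg (act ?n ?\<pi> y) (cperm \<rho> r) (cperm \<rho> as)" by (rule step(3))
  also have "sA u (\<gamma> c' (cperm \<rho> r) (cperm \<rho> as)) + bgg (act ?n ?\<pi> y) (cperm \<rho> r) (cperm \<rho> as)
      = bgg (sM u (osum c') + act ?n ?\<pi> y) (cperm \<rho> r) (cperm \<rho> as)"
    using bgg_lin[OF osum_invs[OF c'] ay l'] bgg_basis[OF c' l'] by simp
  also have "sM u (osum c') + act ?n ?\<pi> y = act ?n ?\<pi> (sM u (osum c) + y)"
    using act_lin[OF pp osum_Mn[OF step(1)] invs_Mn[OF step(2)]] ac by simp
  finally show ?case .
qed

lemma bgg2:
  assumes x: "x \<in> invs Mn act (0 # r)" and l: "length as = length r"
  shows "bgg x (0 # r) (a0 # as) = bgg x r as"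
proof -
  have x': "x \<in> invs Mn act r" using x invs_0 by simp
  have l0: "length (a0 # as) = length (0 # r)" using l by simp
  show ?thesis using x'
  proof (induction rule: invs_induct)
    case zero then show ?case using bgg_zero[OF l] bgg_zero[OF l0] by simp
  next
    case (step c u y)
    obtain x0 where x0: "x0 \<in> B (sum_list r)" "c = orb act r x0" using step(1) by (auto simp: classes_def)
    have c0: "c \<in> classes B act (0 # r)" using step(1) classes_0 by simp
    have y0: "y \<in> invs Mn act (0 # r)" using step(2) invs_0 by simp
    have "bgg (sM u (osum c) + y) (0 # r) (a0 # as) = sA u (\<gamma> c (0 # r) (a0 # as)) + bgg y (0 # r) (a0 # as)"
      using bgg_lin[OF osum_invs[OF c0] y0 l0] bgg_basis[OF c0 l0] by simp
    also have "\<gamma> c (0 # r) (a0 # as) = \<gamma> c r as" using g2[OF x0(1) l, of a0] x0(2) orb_0 by simp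
    also have "sA u (\<gamma> c r as) + bgg y (0 # r) (a0 # as) = bgg (sM u (osum c) + y) r as"
      using bgg_lin[OF osum_invs[OF step(1)] step(2) l] bgg_basis[OF step(1) l] step(3) by simp
    finally show ?case .
  qed
qed

lemma bgg3:
  assumes x: "x \<in> invs Mn act r" and l: "length (a # as) = length r"
  shows "bgg x r (sA c a # as) = sA (c ^ hd r) (bgg x r (a # as))"
  using x
proof (induction rule: invs_induct)
  case zero
  have l': "length (sA c a # as) = length r" using l by simp
  show ?case using bgg_zero[OF l] bgg_zero[OF l'] by simp
next
  case (step c' u y)
  have l': "length (sA c a # as) = length r" using l by simp
  obtain x0 where x0: "x0 \<in> B (sum_list r)" "c' = orb act r x0" using step(1) by (auto simp: classes_def)
  have "bgg (sM u (osum c') + y) r (sA c a # as) = sA u (\<gamma> c' r (sA c a # as)) + bgg y r (sA c a # as)"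
    using bgg_lin[OF osum_invs[OF step(1)] step(2) l'] bgg_basis[OF step(1) l'] by simp
  also have "\<gamma> c' r (sA c a # as) = sA (c ^ hd r) (\<gamma> c' r (a # as))" using g3[OF x0(1) l] x0(2) by simp
  also have "bgg y r (sA c a # as) = sA (c ^ hd r) (bgg y r (a # as))" by (rule step(3))
  also have "sA u (sA (c ^ hd r) (\<gamma> c' r (a # as))) + sA (c ^ hd r) (bgg y r (a # as))
     = sA (c ^ hd r) (sA u (\<gamma> c' r (a # as)) + bgg y r (a # as))"
    by (simp add: A.scale_right_distrib mult.commute)
  also have "sA u (\<gamma> c' r (a # as)) + bgg y r (a # as) = bgg (sM u (osum c') + y) r (a # as)"
    using bgg_lin[OF osum_invs[OF step(1)] step(2) l] bgg_basis[OF step(1) l] by simp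
  finally show ?case .
qed

lemma bgg4:
  assumes x: "x \<in> invs Mn act r" and sq: "sum_list q = length r" and l: "length as = length q"
  shows "bgg x r (rep q as) = bgg (Tq q r x) (coarsen q r) as"
proof -
  let ?r' = "coarsen q r"
  have lr: "length (rep q as) = length r" using sq by (simp add: length_rep)
  have l': "length as = length ?r'" using l by (simp add: length_coarsen)
  have ss: "sum_list ?r' = sum_list r" using sum_coarsen[OF sq] .
  have "Tq q r x \<in> invs Mn act ?r' \<and> bgg x r (rep q as) = bgg (Tq q r x) ?r' as"
    using x
  proof (induction rule: invs_induct)
    case zero then show ?case using Tq_zero[OF sq] invs_zero bgg_zero[OF lr] bgg_zero[OF l'] by simp
  next
    case (step c u y)
    obtain x0 where x0: "x0 \<in> B (sum_list r)" "c = orb act r x0" using step(1) by (auto simp: classes_def)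
    define k :: 'f where "k = of_nat (card (stab act ?r' x0) div card (stab act r x0))"
    define c' where "c' = orb act ?r' x0"
    have c': "c' \<in> classes B act ?r'" using x0(1) ss by (auto simp: c'_def classes_def)
    have Tc: "Tq q r (osum c) = sM k (osum c')"
      using coset_sum[OF SigmaC_coarsen[OF sq] ss x0(1)] x0(2) by (simp add: Tq_def k_def c'_def)
    have Ty: "Tq q r y \<in> invs Mn act ?r'" using step(3) by simp
    have Tsum: "Tq q r (sM u (osum c) + y) = sM u (sM k (osum c')) + Tq q r y"
      using Tq_lin[OF sq osum_Mn[OF step(1)] invs_Mn[OF step(2)]] Tc by simp
    have kc': "sM k (osum c') \<in> invs Mn act ?r'" using M.subspace_scale[OF invs_subspace osum_invs[OF c']] .
    have mem: "Tq q r (sM u (osum c) + y) \<in> invs Mn act ?r'"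
      unfolding Tsum using M.subspace_add[OF invs_subspace] M.subspace_scale[OF invs_subspace] kc' Ty by blast
    have "bgg (sM u (osum c) + y) r (rep q as) = sA u (\<gamma> c r (rep q as)) + bgg y r (rep q as)"
      using bgg_lin[OF osum_invs[OF step(1)] step(2) lr] bgg_basis[OF step(1) lr] by simp
    also have "\<gamma> c r (rep q as) = sA k (\<gamma> c' ?r' as)" using g4[OF x0(1) sq l] x0(2) by (simp add: k_def c'_def)
    also have "bgg y r (rep q as) = bgg (Tq q r y) ?r' as" using step(3) by simp
    also have "sA u (sA k (\<gamma> c' ?r' as)) + bgg (Tq q r y) ?r' as = bgg (Tq q r (sM u (osum c) + y)) ?r' as"
      unfolding Tsum using bgg_lin[OF kc' Ty l'] bgg_scale[OF osum_invs[OF c'] l'] bgg_basis[OF c' l'] by simp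
    finally show ?case using mem by simp
  qed
  then show ?thesis by simp
qed

lemma bgg5:
  assumes x: "x \<in> invs Mn act r" and l: "length (a1 # as) = length r"
  shows "bgg x r ((a0 + a1) # as) = (\<Sum>l\<in>{..hd r}. bgg x (l # (hd r - l) # tl r) (a0 # a1 # as))"
proof -
  have rne: "r \<noteq> []" using l by auto
  have l2: "length ((a0 + a1) # as) = length r" using l by simp
  have ll: "length (a0 # a1 # as) = length (l # (hd r - l) # tl r)" for l using l rne by (cases r) auto
  have HG: "l \<le> hd r \<Longrightarrow> SigmaC (l # (hd r - l) # tl r) \<subseteq> SigmaC r" for l using SigmaC_split[OF rne] .
  have ss: "l \<le> hd r \<Longrightarrow> sum_list (l # (hd r - l) # tl r) = sum_list r" for l using sum_split[OF rne] .
  have inv': "l \<le> hd r \<Longrightarrow> z \<in> invs Mn act r \<Longrightarrow> z \<in> invs Mn act (l # (hd r - l) # tl r)" for l z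
    using invs_refine[OF HG ss] by blast
  show ?thesis using x
  proof (induction rule: invs_induct)
    case zero then show ?case using bgg_zero[OF l2] bgg_zero[OF ll] by simp
  next
    case (step c u y)
    obtain x0 where x0: "x0 \<in> B (sum_list r)" "c = orb act r x0" using step(1) by (auto simp: classes_def)
    have "bgg (sM u (osum c) + y) r ((a0 + a1) # as) = sA u (\<gamma> c r ((a0 + a1) # as)) + bgg y r ((a0 + a1) # as)"
      using bgg_lin[OF osum_invs[OF step(1)] step(2) l2] bgg_basis[OF step(1) l2] by simp
    also have "\<gamma> c r ((a0 + a1) # as) = (\<Sum>l\<in>{..hd r}. \<Sum>c'\<in>{orb act (l # (hd r - l) # tl r) y | y. y \<in> orb act r x0}.
              \<gamma> c' (l # (hd r - l) # tl r) (a0 # a1 # as))"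
      using g5[OF x0(1) l, of a0] x0(2) by simp
    also have "\<dots> = (\<Sum>l\<in>{..hd r}. bgg (osum c) (l # (hd r - l) # tl r) (a0 # a1 # as))"
    proof (rule sum.cong[OF refl])
      fix l assume "l \<in> {..hd r}"
      then have lh: "l \<le> hd r" by simp
      let ?r' = "l # (hd r - l) # tl r"
      let ?C = "{orb act ?r' y |y. y \<in> orb act r x0}"
      have Ccl: "?C \<subseteq> classes B act ?r'" using osum_split(2)[OF HG[OF lh] ss[OF lh] x0(1)] .
      have "(\<Sum>c\<in>?C. \<gamma> c ?r' (a0 # a1 # as)) = (\<Sum>c\<in>?C. bgg (osum c) ?r' (a0 # a1 # as))"
        by (rule sum.cong[OF refl]) (use bgg_basis[OF _ ll] Ccl in auto)
      also have "\<dots> = bgg (\<Sum>c\<in>?C. osum c) ?r' (a0 # a1 # as)"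
        by (rule bgg_sum[symmetric, OF _ ll]) (use Ccl osum_invs in blast)
      also have "(\<Sum>c\<in>?C. osum c) = osum c"
        using osum_split(1)[OF HG[OF lh] ss[OF lh] x0(1)] x0(2) by simp
      finally show "(\<Sum>c\<in>?C. \<gamma> c ?r' (a0 # a1 # as)) = bgg (osum c) ?r' (a0 # a1 # as)" .
    qed
    also have "bgg y r ((a0 + a1) # as) = (\<Sum>l\<in>{..hd r}. bgg y (l # (hd r - l) # tl r) (a0 # a1 # as))"
      by (rule step(3))
    also have "sA u (\<Sum>l\<in>{..hd r}. bgg (osum c) (l # (hd r - l) # tl r) (a0 # a1 # as)) +
        (\<Sum>l\<in>{..hd r}. bgg y (l # (hd r - l) # tl r) (a0 # a1 # as))
      = (\<Sum>l\<in>{..hd r}. bgg (sM u (osum c) + y) (l # (hd r - l) # tl r) (a0 # a1 # as))"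
      unfolding A.scale_sum_right sum.distrib[symmetric]
    proof (rule sum.cong[OF refl])
      fix l assume "l \<in> {..hd r}"
      then have lh: "l \<le> hd r" by simp
      show "sA u (bgg (osum c) (l # (hd r - l) # tl r) (a0 # a1 # as)) + bgg y (l # (hd r - l) # tl r) (a0 # a1 # as)
          = bgg (sM u (osum c) + y) (l # (hd r - l) # tl r) (a0 # a1 # as)"
        using bgg_lin[OF inv'[OF lh osum_invs[OF step(1)]] inv'[OF lh step(2)] ll] by simp
    qed
    finally show ?case .
  qed
qed

lemma bgg_is_beta: "is_beta sA sM Mn act bgg"
  unfolding is_beta_def
proof (intro conjI allI impI)
  fix x r and as :: "'a list"
  assume "\<not> (x \<in> invs Mn act r \<and> length as = length r)"
  then show "bgg x r as = undefined" unfolding bg_def by auto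
next
  fix r x \<rho> and as :: "'a list"
  assume "x \<in> invs Mn act r \<and> length as = length r \<and> \<rho> permutes {..<length r}"
  then show "bgg x r as = bgg (act (sum_list r) (blockperm r \<rho>) x) (cperm \<rho> r) (cperm \<rho> as)"
    using bgg1 by blast
next
  fix r x and a0 :: 'a and as :: "'a list"
  assume "x \<in> invs Mn act (0 # r) \<and> length as = length r"
  then show "bgg x (0 # r) (a0 # as) = bgg x r as" using bgg2 by blast
next
  fix r x c and a :: 'a and as :: "'a list"
  assume "x \<in> invs Mn act r \<and> length (a # as) = length r"
  then show "bgg x r (sA c a # as) = sA (c ^ hd r) (bgg x r (a # as))" using bgg3 by blast
next
  fix r x q and as :: "'a list"
  assume "x \<in> invs Mn act r \<and> sum_list q = length r \<and> length as = length q"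
  then show "bgg x r (rep q as) = bgg (\<Sum>C\<in>lcosets (SigmaC (coarsen q r)) (SigmaC r). act (sum_list r) (SOME \<sigma>. \<sigma> \<in> C) x) (coarsen q r) as"
    using bgg4 unfolding Tq_def by blast
next
  fix r x and a0 a1 :: 'a and as :: "'a list"
  assume "x \<in> invs Mn act r \<and> length (a1 # as) = length r"
  then show "bgg x r ((a0 + a1) # as) = (\<Sum>l\<in>{..hd r}. bgg x (l # (hd r - l) # tl r) (a0 # a1 # as))"
    using bgg5 by blast
next
  fix r x y c and as :: "'a list"
  assume "x \<in> invs Mn act r \<and> y \<in> invs Mn act r \<and> length as = length r"
  then show "bgg (sM c x + y) r as = sA c (bgg x r as) + bgg y r as" using bgg_lin by blast
qed

lemma P_M_bgg: "P_M B act bgg = \<gamma>"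
proof (intro ext)
  fix c r as
  show "P_M B act bgg c r as = \<gamma> c r as"
  proof (cases "c \<in> classes B act r \<and> length as = length r")
    case True
    then show ?thesis using P_M_eq bgg_basis by metis
  next
    case False
    then show ?thesis using g0 by (auto simp: P_M_def)
  qed
qed

end
end


lemma linear_parts:
  assumes "Vector_Spaces.linear sA sB f"
  shows "f (x + y) = f x + f y" "f (sA c x) = sB c (f x)" "f 0 = 0"
proof -
  show a: "f (x + y) = f x + f y" "f (sA c x) = sB c (f x)" using assms unfolding linear_iff by auto
  have "f (0 + 0) = f 0 + f 0" using assms unfolding linear_iff by blast
  then show "f 0 = 0" by simp
qed

theorem proposition4p8:
  fixes sM :: "'f::field \<Rightarrow> 'v::ab_group_add \<Rightarrow> 'v"
    and Mn B :: "nat \<Rightarrow> 'v set"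
    and act :: "nat \<Rightarrow> (nat \<Rightarrow> nat) \<Rightarrow> 'v \<Rightarrow> 'v"
  assumes "sigma_module_basis sM Mn act B"
  shows "(\<forall>(sA :: 'f \<Rightarrow> 'a::ab_group_add \<Rightarrow> 'a) \<beta>.
            vector_space sA \<and> is_beta sA sM Mn act \<beta> \<longrightarrow> is_gamma sA B act (P_M B act \<beta>))
       \<and> (\<forall>sA :: 'f \<Rightarrow> 'a \<Rightarrow> 'a. vector_space sA \<longrightarrow>
            bij_betw (P_M B act) {\<beta>. is_beta sA sM Mn act \<beta>} {\<gamma>. is_gamma sA B act \<gamma>})
       \<and> (\<forall>(sA :: 'f \<Rightarrow> 'a \<Rightarrow> 'a) (sB :: 'f \<Rightarrow> 'b::ab_group_add \<Rightarrow> 'b) \<beta> \<beta>' f.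
            vector_space sA \<and> vector_space sB \<and> is_beta sA sM Mn act \<beta> \<and> is_beta sB sM Mn act \<beta>' \<longrightarrow>
            (beta_hom sA sB Mn act \<beta> \<beta>' f \<longleftrightarrow> gamma_hom sA sB B act (P_M B act \<beta>) (P_M B act \<beta>') f))"
proof -
  interpret S: SM sM Mn B act by (rule SM.intro) (rule assms)
  have part1: "is_gamma sA B act (P_M B act \<beta>)"
    if "vector_space sA" "is_beta sA sM Mn act \<beta>" for sA :: "'f \<Rightarrow> 'a \<Rightarrow> 'a" and \<beta>
    by (rule S.part1[OF that])
  have part2: "bij_betw (P_M B act) {\<beta>. is_beta sA sM Mn act \<beta>} {\<gamma>. is_gamma sA B act \<gamma>}"
    if vA: "vector_space sA" for sA :: "'f \<Rightarrow> 'a \<Rightarrow> 'a"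
    unfolding bij_betw_def
  proof
    interpret A: vector_space sA by (rule vA)
    show "inj_on (P_M B act) {\<beta>. is_beta sA sM Mn act \<beta>}"
    proof (rule inj_onI)
      fix \<beta> \<beta>' assume b: "\<beta> \<in> {\<beta>. is_beta sA sM Mn act \<beta>}" and b': "\<beta>' \<in> {\<beta>. is_beta sA sM Mn act \<beta>}"
        and e: "P_M B act \<beta> = P_M B act \<beta>'"
      have isb: "is_beta sA sM Mn act \<beta>" and isb': "is_beta sA sM Mn act \<beta>'" using b b' by auto
      show "\<beta> = \<beta>'"
      proof (intro ext)
        fix x r and as :: "'a list"
        show "\<beta> x r as = \<beta>' x r as"
        proof (cases "x \<in> invs Mn act r \<and> length as = length r")
          case True
          then have x: "x \<in> invs Mn act r" and l: "length as = length r" by auto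
          show ?thesis using x
          proof (induction rule: S.invs_induct)
            case zero then show ?case using S.b_zero[OF vA isb l] S.b_zero[OF vA isb' l] by simp
          next
            case (step c u y)
            have "\<beta> (osum c) r as = \<beta>' (osum c) r as"
              using P_M_eq[OF step(1) l, of \<beta>] P_M_eq[OF step(1) l, of \<beta>'] e by simp
            then show ?case
              using S.b6[OF vA isb S.osum_invs[OF step(1)] step(2) l]
                S.b6[OF vA isb' S.osum_invs[OF step(1)] step(2) l] step(3) by simp
          qed
        next
          case False
          then show ?thesis using isb isb' unfolding is_beta_def by metis
        qed
      qed
    qed
    show "P_M B act ` {\<beta>. is_beta sA sM Mn act \<beta>} = {\<gamma>. is_gamma sA B act \<gamma>}"
    proof
      show "P_M B act ` {\<beta>. is_beta sA sM Mn act \<beta>} \<subseteq> {\<gamma>. is_gamma sA B act \<gamma>}"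
        using part1[OF vA] by blast
      show "{\<gamma>. is_gamma sA B act \<gamma>} \<subseteq> P_M B act ` {\<beta>. is_beta sA sM Mn act \<beta>}"
      proof
        fix \<gamma> assume "\<gamma> \<in> {\<gamma>. is_gamma sA B act \<gamma>}"
        then have g: "is_gamma sA B act \<gamma>" by simp
        have "\<gamma> = P_M B act (S.bg sA \<gamma>)" using S.P_M_bgg[OF vA g] by simp
        moreover have "S.bg sA \<gamma> \<in> {\<beta>. is_beta sA sM Mn act \<beta>}" using S.bgg_is_beta[OF vA g] by simp
        ultimately show "\<gamma> \<in> P_M B act ` {\<beta>. is_beta sA sM Mn act \<beta>}" by blast
      qed
    qed
  qed
  have part3: "beta_hom sA sB Mn act \<beta> \<beta>' f \<longleftrightarrow> gamma_hom sA sB B act (P_M B act \<beta>) (P_M B act \<beta>') f"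
    if vA: "vector_space sA" and vB: "vector_space sB" and isb: "is_beta sA sM Mn act \<beta>"
      and isb': "is_beta sB sM Mn act \<beta>'"
    for sA :: "'f \<Rightarrow> 'a \<Rightarrow> 'a" and sB :: "'f \<Rightarrow> 'b \<Rightarrow> 'b" and \<beta> \<beta>' f
  proof
    assume h: "beta_hom sA sB Mn act \<beta> \<beta>' f"
    show "gamma_hom sA sB B act (P_M B act \<beta>) (P_M B act \<beta>') f"
      unfolding gamma_hom_def
    proof (intro conjI allI impI)
      show "Vector_Spaces.linear sA sB f" using h by (simp add: beta_hom_def)
      fix c r and as :: "'a list" assume a: "c \<in> classes B act r \<and> length as = length r"
      then have c: "c \<in> classes B act r" and l: "length as = length r" by auto
      have lm: "length (map f as) = length r" using l by simp
      have "f (\<beta> (osum c) r as) = \<beta>' (osum c) r (map f as)"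
        using h S.osum_invs[OF c] l unfolding beta_hom_def by blast
      then show "f (P_M B act \<beta> c r as) = P_M B act \<beta>' c r (map f as)"
        using P_M_eq[OF c l, of \<beta>] P_M_eq[OF c lm, of \<beta>'] by simp
    qed
  next
    assume h: "gamma_hom sA sB B act (P_M B act \<beta>) (P_M B act \<beta>') f"
    have lin: "Vector_Spaces.linear sA sB f" using h by (simp add: gamma_hom_def)
    show "beta_hom sA sB Mn act \<beta> \<beta>' f"
      unfolding beta_hom_def
    proof (intro conjI allI impI lin)
      fix x r and as :: "'a list" assume a: "x \<in> invs Mn act r \<and> length as = length r"
      then have x: "x \<in> invs Mn act r" and l: "length as = length r" by auto
      have lm: "length (map f as) = length r" using l by simp
      show "f (\<beta> x r as) = \<beta>' x r (map f as)" using x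
      proof (induction rule: S.invs_induct)
        case zero then show ?case
          using S.b_zero[OF vA isb l] S.b_zero[OF vB isb' lm] linear_parts(3)[OF lin] by simp
      next
        case (step c u y)
        have "f (\<beta> (osum c) r as) = \<beta>' (osum c) r (map f as)"
          using h step(1) l P_M_eq[OF step(1) l, of \<beta>] P_M_eq[OF step(1) lm, of \<beta>']
          unfolding gamma_hom_def by metis
        then show ?case
          using S.b6[OF vA isb S.osum_invs[OF step(1)] step(2) l]
            S.b6[OF vB isb' S.osum_invs[OF step(1)] step(2) lm] step(3)
            linear_parts(1,2)[OF lin] by simp
      qed
    qed
  qed
  show ?thesis using part1 part2 part3 by blast
qed



end
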